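(* Assume $\Phi_h=M_h=\mathbb{P}_1$. Then any solution $(\phi^{n+1},\mu^{n+1})\in\Phi_h\times M_h$ of the G$_\varepsilon$-scheme satisfies $$\int_\Omega\big(I_h(\phi^{n+1}_-)\big)^2d\boldsymbol x\le C\,\frac{\varepsilon(1-\varepsilon)}{\eta^2}\le C\,\frac{\varepsilon}{\eta^2}\quad\text{and}\quad\int_\Omega\Big(I_h\big((\phi^{n+1}-1)_+\big)\Big)^2d\boldsymbol x\le C\,\frac{\varepsilon(1-\varepsilon)}{\eta^2}\le C\,\frac{\varepsilon}{\eta^2},$$ where $C$ depends on the initial energy $E(\phi^0)$ and on $\int_\Omega I_h(G_\varepsilon(\phi^0))\,d\boldsymbol x$.
   Context: $\Omega\subset\mathbb{R}^d$ ($d=1,2,3$) bounded, $\eta>0$, $\varepsilon\in(0,1/2)$. $f_-=\min\{f,0\}$ and $f_+=\max\{f,0\}$. $F(\phi)=\frac1{4\eta^2}\phi^2(\phi-1)^2=F_c+F_e$ with $F_c(\phi)=\frac1{4\eta^2}(\phi^4-2\phi^3+\frac32\phi^2)$, $F_e(\phi)=-\frac1{8\eta^2}\phi^2$; $E(\phi)=\int_\Omega(\frac12|\nabla\phi|^2+F(\phi))d\boldsymbol x$. The time interval $[0,T]$ is split into $N$ steps of size $\Delta t=T/N$, $n=0,\dots,N-1$. $\mathcal T_h$ is a structured triangulation of $\Omega$ in which every element $I$ has vertices $\boldsymbol x_0,\dots,\boldsymbol x_d$ with $\boldsymbol x_k-\boldsymbol x_0$ parallel to the $k$-th coordinate axis;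 $\Phi_h=M_h$ is the space of continuous piecewise $\mathbb{P}_1$ functions. $I_h$ is nodal $\mathbb{P}_1$ interpolation, $(f,g)_h=\int_\Omega I_h(fg)\,d\boldsymbol x$, $(\cdot,\cdot)$ the $L^2$ product. $G(\phi)=\phi\ln\phi+(1-\phi)\ln(1-\phi)+1$; $G_\varepsilon\in C^2(\mathbb{R})$ equals $G$ on $[\varepsilon,1-\varepsilon]$ and its second-order Taylor polynomial at $\varepsilon$ (resp. $1-\varepsilon$) for $\phi<\varepsilon$ (resp. $\phi>1-\varepsilon$), so $G_\varepsilon''=1/M_\varepsilon$ with $M_\varepsilon(\phi)=\phi(1-\phi)$ truncated to $\varepsilon(1-\varepsilon)$ outside $[\varepsilon,1-\varepsilon]$. For $\phi\in\Phi_h$, $M^G_\varepsilon(\phi)$ is the piecewise constant diagonal matrix with $k$-th entry on $I$ equal to $\frac{\phi(\boldsymbol x_k)-\phi(\boldsymbol x_0)}{G_\varepsilon'(\phi(\boldsymbol x_k))-G_\varepsilon'(\phi(\boldsymbol x_0))}$ if $\phi(\boldsymbol x_k)\ne\phi(\boldsymbol x_0)$, and $1/G_\varepsilon''(\phi(\boldsymbol x_0))$ otherwise. G$_\varepsilon$-scheme: given $\phi^n\in\Phi_h$ (starting from $\phi^0\in\Phi_h$), find $(\phi^{n+1},\mu^{n+1})\in\Phi_h\times M_h$ such that for all $(\bar\phi,\bar\mu)\in\Phi_h\times M_h$: $\frac1{\Delta t}(\phi^{n+1}-\phi^n,\bar\mu)_h+(M^G_\varepsilon(\phi^{n+1})\nabla\mu^{n+1},\nabla\bar\mu)=0$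 and $(\nabla\phi^{n+1},\nabla\bar\phi)+(I_h(F_c'(\phi^{n+1}))+I_h(F_e'(\phi^n)),\bar\phi)_h=(\mu^{n+1},\bar\phi)_h$. *)

theory Defs
  imports "HOL-Analysis.Analysis"
begin

(* An element is a pair (x0, xs): vertex x0 and, for each coordinate axis k,
   a vertex xs k with  X (xs k) - X x0  parallel to the k-th axis.
   A P1 function (element of Phi_h = M_h) is given by its nodal values
   u :: nat => real.
   --------------------------------------------------------------------- *)

type_synonym 'd elem = "nat \<times> ('d \<Rightarrow> nat)"

definition verts :: "'d elem \<Rightarrow> nat set" where
  "verts e = insert (fst e) (range (snd e))"

definition edge_len :: "(nat \<Rightarrow> real^'d) \<Rightarrow> 'd elem \<Rightarrow> 'd \<Rightarrow> real" where
  "edge_len X e k = (X (snd e k) - X (fst e)) $ k"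

definition elem_set :: "(nat \<Rightarrow> real^'d) \<Rightarrow> 'd elem \<Rightarrow> (real^'d) set" where
  "elem_set X e = convex hull (X ` verts e)"

definition structured_elem :: "(nat \<Rightarrow> real^'d) \<Rightarrow> 'd elem \<Rightarrow> bool" where
  "structured_elem X e \<longleftrightarrow>
     (\<forall>k. edge_len X e k \<noteq> 0 \<and> X (snd e k) - X (fst e) = axis k (edge_len X e k))"

text \<open>Conforming structured triangulation of the (bounded, connected) domain
  Omega = union of the elements, with node set Nd and element set Th.\<close>
definition structured_mesh ::
  "(nat \<Rightarrow> real^'d) \<Rightarrow> nat set \<Rightarrow> 'd elem set \<Rightarrow> bool" where
  "structured_mesh X Nd Th \<longleftrightarrow>
     finite Th \<and> Th \<noteq> {} \<and>
     Nd = (\<Union>e\<in>Th. verts e) \<and> inj_on X Nd \<and>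
     (\<forall>e\<in>Th. structured_elem X e) \<and>
     (\<forall>e\<in>Th. \<forall>e'\<in>Th. e \<noteq> e' \<longrightarrow>
         interior (elem_set X e) \<inter> interior (elem_set X e') = {}) \<and>
     (\<forall>e\<in>Th. \<forall>e'\<in>Th.
         elem_set X e \<inter> elem_set X e' = convex hull (X ` (verts e \<inter> verts e'))) \<and>
     connected (\<Union>e\<in>Th. elem_set X e)"

text \<open>The P1 (nodal) interpolant of nodal values u, restricted to element e
  (written in the barycentric coordinates of the structured element).\<close>
definition P1 :: "(nat \<Rightarrow> real^'d) \<Rightarrow> 'd elem \<Rightarrow> (nat \<Rightarrow> real) \<Rightarrow> real^'d \<Rightarrow> real" where
  "P1 X e u y = u (fst e) +
     (\<Sum>k\<in>UNIV. (u (snd e k) - u (fst e)) * ((y - X (fst e)) $ k) / edge_len X e k)"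

definition grad :: "(nat \<Rightarrow> real^'d) \<Rightarrow> 'd elem \<Rightarrow> (nat \<Rightarrow> real) \<Rightarrow> real^'d" where
  "grad X e u = (\<chi> k. (u (snd e k) - u (fst e)) / edge_len X e k)"

definition int_h :: "(nat \<Rightarrow> real^'d) \<Rightarrow> 'd elem set \<Rightarrow> (nat \<Rightarrow> real) \<Rightarrow> real" where
  "int_h X Th w = (\<Sum>e\<in>Th. integral (elem_set X e) (P1 X e w))"

text \<open>Mass-lumped product (f,g)_h = int_Omega I_h(f g) dx.\<close>
definition ip_h :: "(nat \<Rightarrow> real^'d) \<Rightarrow> 'd elem set \<Rightarrow> (nat \<Rightarrow> real) \<Rightarrow> (nat \<Rightarrow> real) \<Rightarrow> real" where
  "ip_h X Th f g = int_h X Th (\<lambda>v. f v * g v)"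

definition grad_ip :: "(nat \<Rightarrow> real^'d) \<Rightarrow> 'd elem set \<Rightarrow> (nat \<Rightarrow> real) \<Rightarrow> (nat \<Rightarrow> real) \<Rightarrow> real" where
  "grad_ip X Th u v = (\<Sum>e\<in>Th. integral (elem_set X e) (\<lambda>y. grad X e u \<bullet> grad X e v))"

definition Fdw :: "real \<Rightarrow> real \<Rightarrow> real" where
  "Fdw \<eta> p = 1 / (4 * \<eta>^2) * p^2 * (p - 1)^2"

definition Fc :: "real \<Rightarrow> real \<Rightarrow> real" where
  "Fc \<eta> p = 1 / (4 * \<eta>^2) * (p^4 - 2 * p^3 + 3/2 * p^2)"

definition Fe :: "real \<Rightarrow> real \<Rightarrow> real" where
  "Fe \<eta> p = - 1 / (8 * \<eta>^2) * p^2"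

definition dFc :: "real \<Rightarrow> real \<Rightarrow> real" where
  "dFc \<eta> p = 1 / (4 * \<eta>^2) * (4 * p^3 - 6 * p^2 + 3 * p)"

definition dFe :: "real \<Rightarrow> real \<Rightarrow> real" where
  "dFe \<eta> p = - 1 / (4 * \<eta>^2) * p"

definition energy :: "(nat \<Rightarrow> real^'d) \<Rightarrow> 'd elem set \<Rightarrow> real \<Rightarrow> (nat \<Rightarrow> real) \<Rightarrow> real" where
  "energy X Th \<eta> \<phi> =
     (\<Sum>e\<in>Th. integral (elem_set X e)
        (\<lambda>y. 1/2 * (norm (grad X e \<phi>))^2 + Fdw \<eta> (P1 X e \<phi> y)))"

definition G :: "real \<Rightarrow> real" where
  "G p = p * ln p + (1 - p) * ln (1 - p) + 1"

definition dG :: "real \<Rightarrow> real" where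
  "dG p = ln p - ln (1 - p)"

definition ddG :: "real \<Rightarrow> real" where
  "ddG p = 1 / (p * (1 - p))"

definition Geps :: "real \<Rightarrow> real \<Rightarrow> real" where
  "Geps \<epsilon> p =
     (if p < \<epsilon> then G \<epsilon> + dG \<epsilon> * (p - \<epsilon>) + ddG \<epsilon> / 2 * (p - \<epsilon>)^2
      else if p > 1 - \<epsilon> then
        G (1 - \<epsilon>) + dG (1 - \<epsilon>) * (p - (1 - \<epsilon>)) + ddG (1 - \<epsilon>) / 2 * (p - (1 - \<epsilon>))^2
      else G p)"

definition dGeps :: "real \<Rightarrow> real \<Rightarrow> real" where
  "dGeps \<epsilon> p =
     (if p < \<epsilon> then dG \<epsilon> + ddG \<epsilon> * (p - \<epsilon>)
      else if p > 1 - \<epsilon> then dG (1 - \<epsilon>) + ddG (1 - \<epsilon>) * (p - (1 - \<epsilon>))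
      else dG p)"

definition Meps :: "real \<Rightarrow> real \<Rightarrow> real" where
  "Meps \<epsilon> p = (if p < \<epsilon> \<or> p > 1 - \<epsilon> then \<epsilon> * (1 - \<epsilon>) else p * (1 - p))"

definition ddGeps :: "real \<Rightarrow> real \<Rightarrow> real" where
  "ddGeps \<epsilon> p = 1 / Meps \<epsilon> p"

text \<open>k-th diagonal entry of M^G_eps(phi) on element e.\<close>
definition MG :: "real \<Rightarrow> 'd elem \<Rightarrow> (nat \<Rightarrow> real) \<Rightarrow> 'd \<Rightarrow> real" where
  "MG \<epsilon> e \<phi> k =
     (let a = \<phi> (fst e); b = \<phi> (snd e k) in
      if b \<noteq> a then (b - a) / (dGeps \<epsilon> b - dGeps \<epsilon> a) else 1 / ddGeps \<epsilon> a)"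

definition mob_ip :: "(nat \<Rightarrow> real^'d) \<Rightarrow> 'd elem set \<Rightarrow> real \<Rightarrow> (nat \<Rightarrow> real)
    \<Rightarrow> (nat \<Rightarrow> real) \<Rightarrow> (nat \<Rightarrow> real) \<Rightarrow> real" where
  "mob_ip X Th \<epsilon> \<phi> \<mu> \<psi> =
     (\<Sum>e\<in>Th. integral (elem_set X e)
        (\<lambda>y. \<Sum>k\<in>UNIV. MG \<epsilon> e \<phi> k * (grad X e \<mu>) $ k * (grad X e \<psi>) $ k))"

definition Geps_scheme :: "(nat \<Rightarrow> real^'d) \<Rightarrow> 'd elem set \<Rightarrow> real \<Rightarrow> real \<Rightarrow> real
    \<Rightarrow> nat \<Rightarrow> (nat \<Rightarrow> nat \<Rightarrow> real) \<Rightarrow> (nat \<Rightarrow> nat \<Rightarrow> real) \<Rightarrow> bool" where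
  "Geps_scheme X Th \<eta> \<epsilon> dt N \<phi> \<mu> \<longleftrightarrow>
     (\<forall>m<N. \<forall>\<psi>::nat \<Rightarrow> real.
        1 / dt * ip_h X Th (\<lambda>v. \<phi> (Suc m) v - \<phi> m v) \<psi>
          + mob_ip X Th \<epsilon> (\<phi> (Suc m)) (\<mu> (Suc m)) \<psi> = 0
      \<and> grad_ip X Th (\<phi> (Suc m)) \<psi>
          + ip_h X Th (\<lambda>v. dFc \<eta> (\<phi> (Suc m) v) + dFe \<eta> (\<phi> m v)) \<psi>
          = ip_h X Th (\<mu> (Suc m)) \<psi>)"

end

theory Submission
  imports Defs
begin


lemma cont_int: fixes f :: "real^'d \<Rightarrow> real"
  assumes "compact S" "continuous_on S f" shows "f integrable_on S"
proof -
  have "integrable lborel (\<lambda>x. indicator S x *\<^sub>R f x)" by (rule borel_integrable_compact[OF assms])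
  hence "integrable lebesgue (\<lambda>x. indicator S x *\<^sub>R f x)"
    using integrable_completion by blast
  hence "(\<lambda>x. indicator S x *\<^sub>R f x) integrable_on UNIV" by (rule integrable_on_lebesgue)
  moreover have "(\<lambda>x. indicator S x *\<^sub>R f x) = (\<lambda>x. if x \<in> S then f x else 0)"
    by (auto simp: indicator_def)
  ultimately show ?thesis using integrable_restrict_UNIV by metis
qed

lemma integral_const_mult: "integral S (\<lambda>x. c * f x) = c * integral S (f :: 'a::euclidean_space \<Rightarrow> real)"
  using integral_cmul[of S c f] by simp

lemma finite_verts: "finite (verts (e :: 'd::finite elem))"
  by (simp add: verts_def)

lemma compact_elem: "compact (elem_set X (e::'d::finite elem))"
  unfolding elem_set_def by (intro compact_convex_hull finite_imp_compact finite_imageI finite_verts)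

lemma convex_elem: "convex (elem_set X e)"
  unfolding elem_set_def by simp

lemma cont_P1: "continuous_on S (P1 X e w)"
proof -
  have eq: "P1 X e w = (\<lambda>y. w (fst e) + (\<Sum>k\<in>UNIV. ((w (snd e k) - w (fst e)) / edge_len X e k) * ((y - X (fst e)) $ k)))"
    by (auto simp: P1_def fun_eq_iff)
  show ?thesis unfolding eq by (intro continuous_intros)
qed

definition lam :: "(nat \<Rightarrow> real^'d) \<Rightarrow> 'd elem \<Rightarrow> real^'d \<Rightarrow> 'd \<Rightarrow> real" where
  "lam X e y k = (y - X (fst e)) $ k / edge_len X e k"

lemma P1_bary: "P1 X e w y = (1 - (\<Sum>k\<in>UNIV. lam X e y k)) * w (fst e) + (\<Sum>k\<in>UNIV. lam X e y k * w (snd e k))"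
proof -
  have "P1 X e w y = w (fst e) + (\<Sum>k\<in>UNIV. lam X e y k * w (snd e k) - lam X e y k * w (fst e))"
    unfolding P1_def lam_def by (intro arg_cong2[where f="(+)"] refl sum.cong) (simp add: divide_inverse algebra_simps)
  then show ?thesis by (simp add: sum_subtractf sum_distrib_left algebra_simps)
qed

lemma lam_vert0: "lam X e (X (fst e)) k = 0"
  by (simp add: lam_def)

lemma lam_vertj: assumes "structured_elem X e"
  shows "lam X e (X (snd e j)) k = (if k = j then 1 else 0)"
proof -
  have "X (snd e j) - X (fst e) = axis j (edge_len X e j)" "edge_len X e k \<noteq> 0" "edge_len X e j \<noteq> 0"
    using assms by (auto simp: structured_elem_def)
  then show ?thesis by (simp add: lam_def axis_def)
qed

lemma lam_affine: "lam X e ((1 - t) *\<^sub>R a + t *\<^sub>R b) k = (1 - t) * lam X e a k + t * lam X e b k"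
  unfolding lam_def by (simp add: algebra_simps add_divide_distrib diff_divide_distrib)

lemma lam_nonneg_sum:
  assumes "structured_elem X e" "y \<in> elem_set X e"
  shows "(\<forall>k. 0 \<le> lam X e y k) \<and> (\<Sum>k\<in>UNIV. lam X e y k) \<le> 1"
proof -
  let ?H = "{y. (\<forall>k. 0 \<le> lam X e y k) \<and> (\<Sum>k\<in>UNIV. lam X e y k) \<le> 1}"
  have cv: "convex ?H"
  proof (rule convexI)
    fix a b and u v :: real assume a: "a \<in> ?H" and b: "b \<in> ?H" and u: "0 \<le> u" "0 \<le> v" "u + v = 1"
    have uv: "u = 1 - v" using u by simp
    have eq: "\<And>k. lam X e (u *\<^sub>R a + v *\<^sub>R b) k = u * lam X e a k + v * lam X e b k"
      using lam_affine[of X e v a b] uv by simp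
    have "(\<Sum>k\<in>UNIV. lam X e (u *\<^sub>R a + v *\<^sub>R b) k) = u * (\<Sum>k\<in>UNIV. lam X e a k) + v * (\<Sum>k\<in>UNIV. lam X e b k)"
      by (simp add: eq sum.distrib sum_distrib_left)
    also have "\<dots> \<le> u * 1 + v * 1"
      using a b u by (intro add_mono mult_left_mono) auto
    finally show "u *\<^sub>R a + v *\<^sub>R b \<in> ?H" using a b u by (auto simp: eq)
  qed
  have "X ` verts e \<subseteq> ?H"
  proof
    fix z assume "z \<in> X ` verts e"
    then obtain v where v: "v \<in> verts e" "z = X v" by auto
    show "z \<in> ?H"
    proof (cases "v = fst e")
      case True then show ?thesis using v by (simp add: lam_vert0)
    next
      case False
      then obtain j where "v = snd e j" using v by (auto simp: verts_def)
      then show ?thesis using v lam_vertj[OF assms(1)]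
        by (simp add: sum.delta)
    qed
  qed
  hence "elem_set X e \<subseteq> ?H" unfolding elem_set_def using hull_minimal[of "X ` verts e" ?H convex] cv by blast
  thus ?thesis using assms by auto
qed

lemma P1_const: "P1 X e (\<lambda>_. c) y = c"
  by (simp add: P1_def)

lemma P1_add: "P1 X e (\<lambda>v. a v + b v) y = P1 X e a y + P1 X e b y"
  unfolding P1_bary by (simp add: sum.distrib algebra_simps)

lemma P1_diff: "P1 X e (\<lambda>v. a v - b v) y = P1 X e a y - P1 X e b y"
  unfolding P1_bary by (simp add: sum_subtractf algebra_simps)

lemma P1_cmult: "P1 X e (\<lambda>v. c * a v) y = c * P1 X e a y"
  by (simp add: P1_def sum_distrib_left algebra_simps)

lemma P1_mono:
  assumes "structured_elem X e" "y \<in> elem_set X e" "\<And>v. v \<in> verts e \<Longrightarrow> a v \<le> b v"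
  shows "P1 X e a y \<le> P1 X e b y"
proof -
  note l = lam_nonneg_sum[OF assms(1,2)]
  have "fst e \<in> verts e" "\<And>k. snd e k \<in> verts e" by (auto simp: verts_def)
  hence ab: "a (fst e) \<le> b (fst e)" "\<And>k. a (snd e k) \<le> b (snd e k)" using assms(3) by auto
  show ?thesis unfolding P1_bary
    by (intro add_mono mult_left_mono sum_mono) (use l ab in auto)
qed

lemma P1_jensen:
  assumes "structured_elem X e" "y \<in> elem_set X e"
  shows "(P1 X e w y)^2 \<le> P1 X e (\<lambda>v. (w v)^2) y"
proof -
  note l = lam_nonneg_sum[OF assms]
  define m where "m = P1 X e w y"
  define s where "s = (\<Sum>k\<in>UNIV. lam X e y k)"
  have m: "m = (1 - s) * w (fst e) + (\<Sum>k\<in>UNIV. lam X e y k * w (snd e k))"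
    unfolding m_def s_def by (rule P1_bary)
  have "(1 - s) * (w (fst e) - m)^2 + (\<Sum>k\<in>UNIV. lam X e y k * (w (snd e k) - m)^2)
      = (1 - s) * (w (fst e))^2 - 2 * m * ((1 - s) * w (fst e)) + (1 - s) * m^2
        + ((\<Sum>k\<in>UNIV. lam X e y k * (w (snd e k))^2) - 2 * m * (\<Sum>k\<in>UNIV. lam X e y k * w (snd e k)) + m^2 * s)"
    unfolding s_def
    by (simp add: power2_eq_square algebra_simps sum.distrib sum_subtractf sum_distrib_left)
  also have "\<dots> = P1 X e (\<lambda>v. (w v)^2) y - m^2"
  proof -
    have ms: "(\<Sum>k\<in>UNIV. lam X e y k * w (snd e k)) = m - (1 - s) * w (fst e)" using m by simp
    show ?thesis unfolding P1_bary s_def[symmetric] ms by (simp add: power2_eq_square algebra_simps)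
  qed
  finally have eq: "P1 X e (\<lambda>v. (w v)^2) y - m^2 = (1 - s) * (w (fst e) - m)^2 + (\<Sum>k\<in>UNIV. lam X e y k * (w (snd e k) - m)^2)" by simp
  have "0 \<le> (1 - s) * (w (fst e) - m)^2 + (\<Sum>k\<in>UNIV. lam X e y k * (w (snd e k) - m)^2)"
    using l unfolding s_def by (intro add_nonneg_nonneg sum_nonneg mult_nonneg_nonneg) auto
  thus ?thesis using eq m_def by simp
qed

lemma P1_vert:
  assumes "structured_elem X e" "v \<in> verts e"
  shows "P1 X e w (X v) = w v"
proof (cases "v = fst e")
  case True then show ?thesis by (simp add: P1_bary lam_vert0)
next
  case False
  then obtain j where j: "v = snd e j" using assms(2) by (auto simp: verts_def)
  have l: "lam X e (X (snd e j)) = (\<lambda>k. if k = j then 1 else 0)"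
    by (rule ext) (rule lam_vertj[OF assms(1)])
  have "(\<Sum>k\<in>UNIV. (if k = j then 1 else 0) * w (snd e k)) = w (snd e j)"
    by (simp add: if_distrib[of "\<lambda>x. x * _"] sum.delta cong: if_cong)
  then show ?thesis unfolding P1_bary j l by simp
qed

lemma P1_affine: "P1 X e w ((1 - t) *\<^sub>R a + t *\<^sub>R b) = (1 - t) * P1 X e w a + t * P1 X e w b"
proof -
  have s1: "(\<Sum>k\<in>UNIV. lam X e ((1 - t) *\<^sub>R a + t *\<^sub>R b) k) = (1 - t) * (\<Sum>k\<in>UNIV. lam X e a k) + t * (\<Sum>k\<in>UNIV. lam X e b k)"
    unfolding lam_affine by (simp add: sum.distrib sum_distrib_left)
  have s2: "(\<Sum>k\<in>UNIV. lam X e ((1 - t) *\<^sub>R a + t *\<^sub>R b) k * w (snd e k)) = (1 - t) * (\<Sum>k\<in>UNIV. lam X e a k * w (snd e k)) + t * (\<Sum>k\<in>UNIV. lam X e b k * w (snd e k))"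
    unfolding lam_affine by (simp add: sum.distrib sum_distrib_left distrib_right mult.assoc)
  show ?thesis unfolding P1_bary s1 s2 by (simp add: algebra_simps)
qed

lemma int_comp:
  fixes g :: "real \<Rightarrow> real"
  assumes "continuous_on UNIV g"
  shows "(\<lambda>y. g (P1 X e w y)) integrable_on elem_set X e"
proof -
  have "continuous_on (elem_set X e) (\<lambda>y. g (P1 X e w y))"
    using continuous_on_compose2[OF assms cont_P1[of "elem_set X e" X e w]] by auto
  thus ?thesis by (intro cont_int compact_elem)
qed

lemma int_P1: "P1 X e w integrable_on elem_set X e"
  using int_comp[of "\<lambda>x. x" X e w] by simp

definition wt :: "(nat \<Rightarrow> real^'d) \<Rightarrow> 'd::finite elem \<Rightarrow> real" where
  "wt X e = integral (elem_set X e) (\<lambda>_. 1::real)"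

lemma wt_nonneg: "0 \<le> wt X e"
  unfolding wt_def by (rule integral_nonneg) (auto intro: cont_int[OF compact_elem] continuous_intros)

lemma integral_const_wt: "integral (elem_set X e) (\<lambda>_. c) = c * wt X e"
  unfolding wt_def using integral_const_mult[of "elem_set X e" c "\<lambda>_. 1"] by simp

lemma int_h_add: "int_h X Th (\<lambda>v. a v + b v) = int_h X Th a + int_h X Th b"
  unfolding int_h_def P1_add by (simp add: integral_add int_P1 sum.distrib)

lemma int_h_diff: "int_h X Th (\<lambda>v. a v - b v) = int_h X Th a - int_h X Th b"
  unfolding int_h_def P1_diff by (simp add: integral_diff int_P1 sum_subtractf)

lemma int_h_cmult: "int_h X Th (\<lambda>v. c * a v) = c * int_h X Th a"
  unfolding int_h_def P1_cmult by (simp add: integral_const_mult sum_distrib_left)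

lemma int_h_const: "int_h X Th (\<lambda>_. c) = c * (\<Sum>e\<in>Th. wt X e)"
  unfolding int_h_def P1_const by (simp add: integral_const_wt sum_distrib_left)

lemma int_h_mono:
  assumes "\<And>e. e \<in> Th \<Longrightarrow> structured_elem X e"
    and "\<And>e v. e \<in> Th \<Longrightarrow> v \<in> verts e \<Longrightarrow> a v \<le> b v"
  shows "int_h X Th a \<le> int_h X Th b"
  unfolding int_h_def
  by (intro sum_mono integral_le int_P1 P1_mono assms) auto

lemma grad_add: "grad X e (\<lambda>v. a v + b v) = grad X e a + grad X e b"
  by (simp add: grad_def vec_eq_iff add_divide_distrib[symmetric] algebra_simps)

lemma grad_diff: "grad X e (\<lambda>v. a v - b v) = grad X e a - grad X e b"
  by (simp add: grad_def vec_eq_iff diff_divide_distrib)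

lemma grad_cmult: "grad X e (\<lambda>v. c * a v) = c *\<^sub>R grad X e a"
  by (simp add: grad_def vec_eq_iff algebra_simps)

lemma grad_ip_eq: "grad_ip X Th u v = (\<Sum>e\<in>Th. wt X e * (grad X e u \<bullet> grad X e v))"
  unfolding grad_ip_def integral_const_wt by (simp add: mult.commute)

lemma mob_ip_eq: "mob_ip X Th \<epsilon> \<phi> \<mu> \<psi> = (\<Sum>e\<in>Th. wt X e * (\<Sum>k\<in>UNIV. MG \<epsilon> e \<phi> k * (grad X e \<mu>) $ k * (grad X e \<psi>) $ k))"
  unfolding mob_ip_def integral_const_wt by (simp add: mult.commute)



lemma G_lower: assumes "0 < p" "p < 1" shows "1 - ln 2 \<le> G p"
proof -
  have h: "q - 1/2 - q * ln 2 \<le> q * ln q" if "0 < q" for q :: real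
  proof -
    have "ln (1 / (2*q)) \<le> 1 / (2*q) - 1" using that by (intro ln_le_minus_one) auto
    hence "- ln (2*q) \<le> 1 / (2*q) - 1" using that by (simp add: ln_div)
    hence "ln 2 + ln q \<ge> 1 - 1/(2*q)" using that by (simp add: ln_mult)
    hence "q * (ln 2 + ln q) \<ge> q * (1 - 1/(2*q))" using that by (intro mult_left_mono) auto
    thus ?thesis using that by (simp add: algebra_simps)
  qed
  show ?thesis using h[of p] h[of "1-p"] assms unfolding G_def by (simp add: algebra_simps)
qed

lemma ln2_lt1: "1 - ln 2 > (0::real)"
  using ln_2_less_1 by simp

lemma dG_strict: assumes "0 < a" "a < b" "b < 1" shows "dG a < dG b"
proof -
  have "ln a < ln b" using assms by simp
  moreover have "ln (1 - b) < ln (1 - a)" using assms by simp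
  ultimately show ?thesis unfolding dG_def by simp
qed

lemma dG_mono: assumes "0 < a" "a \<le> b" "b < 1" shows "dG a \<le> dG b"
  using dG_strict[of a b] assms by (cases "a = b") auto

lemma dG_half: assumes "0 < p" "p < 1/2" shows "dG p < 0" "dG (1 - p) > 0"
  using dG_strict[of p "1-p"] assms unfolding dG_def by auto

lemma ddG_pos: assumes "0 < p" "p < 1" shows "ddG p > 0"
  using assms unfolding ddG_def by simp

lemma DERIV_G: assumes "0 < p" "p < 1" shows "(G has_real_derivative dG p) (at p)"
proof -
  have "((\<lambda>p. p * ln p + (1 - p) * ln (1 - p) + 1) has_real_derivative
     (1 * ln p + p * (1 / p) + ((- 1) * ln (1 - p) + (1 - p) * (- 1 / (1 - p))) + 0)) (at p)"
    using assms by (intro derivative_eq_intros) auto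
  moreover have "1 * ln p + p * (1 / p) + ((- 1) * ln (1 - p) + (1 - p) * (- 1 / (1 - p))) + 0 = dG p"
    using assms unfolding dG_def by simp
  ultimately show ?thesis unfolding G_def[abs_def] by simp
qed

lemma dGeps_strict:
  assumes e: "0 < \<epsilon>" "\<epsilon> < 1/2" and ab: "a < b"
  shows "dGeps \<epsilon> a < dGeps \<epsilon> b"
proof -
  have d1: "ddG \<epsilon> > 0" "ddG (1 - \<epsilon>) > 0" using e by (auto intro: ddG_pos)
  have m: "dG \<epsilon> \<le> dG (1 - \<epsilon>)" using e by (intro dG_mono) auto
  have mid: "dG \<epsilon> \<le> dG p" "dG p \<le> dG (1 - \<epsilon>)" if "\<epsilon> \<le> p" "p \<le> 1 - \<epsilon>" for p
    using that e by (auto intro: dG_mono)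
  have st: "dG a < dG b" if "\<epsilon> \<le> a" "b \<le> 1 - \<epsilon>" using that e ab by (intro dG_strict) auto
  have l1: "ddG \<epsilon> * (a - \<epsilon>) < 0" if "a < \<epsilon>" using that d1 by (simp add: mult_pos_neg)
  have l2: "ddG \<epsilon> * (a - \<epsilon>) < ddG \<epsilon> * (b - \<epsilon>)" using ab d1 by simp
  have r1: "ddG (1-\<epsilon>) * (b - (1-\<epsilon>)) > 0" if "b > 1 - \<epsilon>" using that d1 by simp
  have r2: "ddG (1-\<epsilon>) * (a - (1-\<epsilon>)) < ddG (1-\<epsilon>) * (b - (1-\<epsilon>))" using ab d1 by simp
  show ?thesis unfolding dGeps_def
    using ab e m mid[of a] mid[of b] st l1 l2 r1 r2 by (auto simp: not_less)
qed

lemma dGeps_mono: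
  assumes e: "0 < \<epsilon>" "\<epsilon> < 1/2" and ab: "a \<le> b"
  shows "dGeps \<epsilon> a \<le> dGeps \<epsilon> b"
  using dGeps_strict[OF e, of a b] ab by (cases "a = b") auto

definition PP :: "(real \<Rightarrow> real) \<Rightarrow> (real \<Rightarrow> real) \<Rightarrow> real \<Rightarrow> real \<Rightarrow> bool" where
  "PP f f' s t \<longleftrightarrow> f' s * (t - s) \<le> f t - f s \<and> f t - f s \<le> f' t * (t - s)"

lemma PP_piece:
  assumes st: "s \<le> t"
    and der: "\<And>x. s \<le> x \<Longrightarrow> x \<le> t \<Longrightarrow> (g has_real_derivative d x) (at x)"
    and mono: "\<And>x y. s \<le> x \<Longrightarrow> x \<le> y \<Longrightarrow> y \<le> t \<Longrightarrow> d x \<le> d y"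
    and fg: "\<And>x. s \<le> x \<Longrightarrow> x \<le> t \<Longrightarrow> f x = g x"
    and fd: "\<And>x. s \<le> x \<Longrightarrow> x \<le> t \<Longrightarrow> f' x = d x"
  shows "PP f f' s t"
proof (cases "s = t")
  case True then show ?thesis by (simp add: PP_def)
next
  case False
  hence lt: "s < t" using st by simp
  obtain z where z: "s < z" "z < t" "g t - g s = (t - s) * d z"
    using MVT2[OF lt, of g d] der by blast
  have "d s \<le> d z" "d z \<le> d t" using z lt by (auto intro: mono)
  hence "d s * (t - s) \<le> d z * (t - s)" "d z * (t - s) \<le> d t * (t - s)" using lt
    by (auto intro: mult_right_mono)
  then show ?thesis unfolding PP_def using z fg[of s] fg[of t] fd[of s] fd[of t] st
    by (simp add: mult.commute)
qed

lemma PP_chain: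
  assumes mono: "\<And>x y. x \<le> y \<Longrightarrow> f' x \<le> f' y"
    and "PP f f' a m" "PP f f' m b" "a \<le> m" "m \<le> b"
  shows "PP f f' a b"
proof -
  have "f' a * (m - a) \<le> f' m * (m - a)" "f' a * (b - m) \<le> f' m * (b - m)"
       "f' m * (m - a) \<le> f' b * (m - a)" "f' m * (b - m) \<le> f' b * (b - m)"
    using assms by (auto intro!: mult_right_mono mono)
  then show ?thesis using assms(2,3) unfolding PP_def by (simp add: algebra_simps)
qed

lemma PP_Geps:
  assumes e: "0 < \<epsilon>" "\<epsilon> < 1/2" and ab: "a \<le> b"
  shows "PP (Geps \<epsilon>) (dGeps \<epsilon>) a b"
proof -
  define c1 where "c1 = \<epsilon>"
  define c2 where "c2 = 1 - \<epsilon>"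
  have c12: "c1 < c2" "0 < c1" "c2 < 1" using e by (auto simp: c1_def c2_def)
  have mono: "\<And>x y. x \<le> y \<Longrightarrow> dGeps \<epsilon> x \<le> dGeps \<epsilon> y" using dGeps_mono[OF e] by blast
  have dd: "ddG \<epsilon> > 0" "ddG (1 - \<epsilon>) > 0" using e by (auto intro: ddG_pos)
  have P1: "PP (Geps \<epsilon>) (dGeps \<epsilon>) s t" if "s \<le> t" "t \<le> c1" for s t
  proof (rule PP_piece[where g = "\<lambda>p. G \<epsilon> + dG \<epsilon> * (p - \<epsilon>) + ddG \<epsilon> / 2 * (p - \<epsilon>)^2"
                           and d = "\<lambda>p. dG \<epsilon> + ddG \<epsilon> * (p - \<epsilon>)"])
    show "s \<le> t" by fact
    fix x assume x: "s \<le> x" "x \<le> t"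
    show "((\<lambda>p. G \<epsilon> + dG \<epsilon> * (p - \<epsilon>) + ddG \<epsilon> / 2 * (p - \<epsilon>)^2) has_real_derivative dG \<epsilon> + ddG \<epsilon> * (x - \<epsilon>)) (at x)"
      by (auto intro!: derivative_eq_intros simp: power2_eq_square algebra_simps)
    show "Geps \<epsilon> x = G \<epsilon> + dG \<epsilon> * (x - \<epsilon>) + ddG \<epsilon> / 2 * (x - \<epsilon>)^2"
      using x that e unfolding Geps_def c1_def by (cases "x = \<epsilon>") auto
    show "dGeps \<epsilon> x = dG \<epsilon> + ddG \<epsilon> * (x - \<epsilon>)"
      using x that e unfolding dGeps_def c1_def by (cases "x = \<epsilon>") auto
  next
    fix x y :: real assume "s \<le> x" "x \<le> y" "y \<le> t"
    then show "dG \<epsilon> + ddG \<epsilon> * (x - \<epsilon>) \<le> dG \<epsilon> + ddG \<epsilon> * (y - \<epsilon>)" using dd by simp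
  qed
  have P3: "PP (Geps \<epsilon>) (dGeps \<epsilon>) s t" if "s \<le> t" "c2 \<le> s" for s t
  proof (rule PP_piece[where g = "\<lambda>p. G (1-\<epsilon>) + dG (1-\<epsilon>) * (p - (1-\<epsilon>)) + ddG (1-\<epsilon>) / 2 * (p - (1-\<epsilon>))^2"
                           and d = "\<lambda>p. dG (1-\<epsilon>) + ddG (1-\<epsilon>) * (p - (1-\<epsilon>))"])
    show "s \<le> t" by fact
    fix x assume x: "s \<le> x" "x \<le> t"
    show "((\<lambda>p. G (1-\<epsilon>) + dG (1-\<epsilon>) * (p - (1-\<epsilon>)) + ddG (1-\<epsilon>) / 2 * (p - (1-\<epsilon>))^2) has_real_derivative dG (1-\<epsilon>) + ddG (1-\<epsilon>) * (x - (1-\<epsilon>))) (at x)"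
      by (auto intro!: derivative_eq_intros simp: power2_eq_square algebra_simps)
    show "Geps \<epsilon> x = G (1-\<epsilon>) + dG (1-\<epsilon>) * (x - (1-\<epsilon>)) + ddG (1-\<epsilon>) / 2 * (x - (1-\<epsilon>))^2"
      using x that e unfolding Geps_def c2_def by (cases "x = 1 - \<epsilon>") auto
    show "dGeps \<epsilon> x = dG (1-\<epsilon>) + ddG (1-\<epsilon>) * (x - (1-\<epsilon>))"
      using x that e unfolding dGeps_def c2_def by (cases "x = 1 - \<epsilon>") auto
  next
    fix x y :: real assume "s \<le> x" "x \<le> y" "y \<le> t"
    then show "dG (1-\<epsilon>) + ddG (1-\<epsilon>) * (x - (1-\<epsilon>)) \<le> dG (1-\<epsilon>) + ddG (1-\<epsilon>) * (y - (1-\<epsilon>))" using dd by simp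
  qed
  have P2: "PP (Geps \<epsilon>) (dGeps \<epsilon>) s t" if "s \<le> t" "c1 \<le> s" "t \<le> c2" for s t
  proof (rule PP_piece[where g = G and d = dG])
    show "s \<le> t" by fact
    fix x assume x: "s \<le> x" "x \<le> t"
    show "(G has_real_derivative dG x) (at x)" using x that c12 by (intro DERIV_G) auto
    show "Geps \<epsilon> x = G x" using x that e unfolding Geps_def c1_def c2_def by auto
    show "dGeps \<epsilon> x = dG x" using x that e unfolding dGeps_def c1_def c2_def by auto
  next
    fix x y :: real assume "s \<le> x" "x \<le> y" "y \<le> t"
    then show "dG x \<le> dG y" using that c12 by (intro dG_mono) auto
  qed
  show ?thesis
  proof -
    consider "b \<le> c1" | "c1 \<le> a" "b \<le> c2" | "c2 \<le> a" | "a \<le> c1" "c1 \<le> b" "b \<le> c2"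
      | "a \<le> c1" "c2 \<le> b" | "c1 \<le> a" "a \<le> c2" "c2 \<le> b"
      using c12 ab by linarith
    then show ?thesis
    proof cases
      case 1 then show ?thesis using P1 ab by auto
    next
      case 2 then show ?thesis using P2 ab by auto
    next
      case 3 then show ?thesis using P3 ab by auto
    next
      case 4
      have A: "PP (Geps \<epsilon>) (dGeps \<epsilon>) a c1" by (rule P1) (use 4 in auto)
      have B: "PP (Geps \<epsilon>) (dGeps \<epsilon>) c1 b" by (rule P2) (use 4 in auto)
      show ?thesis by (rule PP_chain[OF mono A B]) (use 4 in auto)
    next
      case 5
      have A: "PP (Geps \<epsilon>) (dGeps \<epsilon>) a c1" by (rule P1) (use 5 in auto)
      have B: "PP (Geps \<epsilon>) (dGeps \<epsilon>) c1 c2" by (rule P2) (use c12 in auto)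
      have C: "PP (Geps \<epsilon>) (dGeps \<epsilon>) c2 b" by (rule P3) (use 5 in auto)
      have D: "PP (Geps \<epsilon>) (dGeps \<epsilon>) a c2" by (rule PP_chain[OF mono A B]) (use 5 c12 in auto)
      show ?thesis by (rule PP_chain[OF mono D C]) (use 5 c12 in auto)
    next
      case 6
      have A: "PP (Geps \<epsilon>) (dGeps \<epsilon>) a c2" by (rule P2) (use 6 in auto)
      have B: "PP (Geps \<epsilon>) (dGeps \<epsilon>) c2 b" by (rule P3) (use 6 in auto)
      show ?thesis by (rule PP_chain[OF mono A B]) (use 6 in auto)
    qed
  qed
qed

lemma Geps_conv:
  assumes e: "0 < \<epsilon>" "\<epsilon> < 1/2"
  shows "Geps \<epsilon> b - Geps \<epsilon> a \<le> dGeps \<epsilon> b * (b - a)"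
proof (cases "a \<le> b")
  case True then show ?thesis using PP_Geps[OF e True] by (simp add: PP_def)
next
  case False then show ?thesis using PP_Geps[OF e, of b a] by (simp add: PP_def algebra_simps)
qed

lemma Geps_lower:
  assumes e: "0 < \<epsilon>" "\<epsilon> < 1/2"
  shows "1 - ln 2 \<le> Geps \<epsilon> p"
proof -
  have g1: "1 - ln 2 \<le> G \<epsilon>" "1 - ln 2 \<le> G (1 - \<epsilon>)" using e by (auto intro: G_lower)
  have d: "dG \<epsilon> < 0" "dG (1 - \<epsilon>) > 0" using dG_half e by auto
  have dd: "ddG \<epsilon> > 0" "ddG (1 - \<epsilon>) > 0" using e by (auto intro: ddG_pos)
  show ?thesis
  proof (cases "p < \<epsilon>")
    case True
    have "0 \<le> dG \<epsilon> * (p - \<epsilon>)" using True d by (simp add: mult_nonpos_nonpos)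
    moreover have "0 \<le> ddG \<epsilon> / 2 * (p - \<epsilon>)^2" using dd by simp
    ultimately show ?thesis using True g1 unfolding Geps_def by simp
  next
    case False
    show ?thesis
    proof (cases "p > 1 - \<epsilon>")
      case True
      have "0 \<le> dG (1-\<epsilon>) * (p - (1-\<epsilon>))" using True d by simp
      moreover have "0 \<le> ddG (1-\<epsilon>) / 2 * (p - (1-\<epsilon>))^2" using dd by simp
      ultimately show ?thesis using True False g1 unfolding Geps_def by simp
    next
      case F2: False
      then show ?thesis using False e G_lower[of p] unfolding Geps_def by simp
    qed
  qed
qed

lemma Geps_nonneg: assumes "0 < \<epsilon>" "\<epsilon> < 1/2" shows "0 \<le> Geps \<epsilon> p"
  using Geps_lower[OF assms, of p] ln2_lt1 by linarith

lemma neg_bound: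
  assumes e: "0 < \<epsilon>" "\<epsilon> < 1/2"
  shows "(min p 0)^2 \<le> 2 * (\<epsilon> * (1 - \<epsilon>)) * Geps \<epsilon> p"
proof (cases "p < 0")
  case False then show ?thesis using Geps_nonneg[OF e, of p] e by simp
next
  case True
  have g1: "1 - ln 2 \<le> G \<epsilon>" using e by (auto intro: G_lower)
  have d: "dG \<epsilon> < 0" using dG_half e by auto
  have pos: "0 < \<epsilon> * (1 - \<epsilon>)" using e by simp
  have "0 \<le> dG \<epsilon> * (p - \<epsilon>)" using True e d by (simp add: mult_nonpos_nonpos)
  hence "ddG \<epsilon> / 2 * (p - \<epsilon>)^2 \<le> Geps \<epsilon> p" using True e g1 ln2_lt1 unfolding Geps_def by simp
  moreover have "p^2 \<le> (p - \<epsilon>)^2"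
  proof -
    have "(p - \<epsilon>)^2 - p^2 = \<epsilon> * (\<epsilon> - 2 * p)" by (simp add: power2_eq_square algebra_simps)
    moreover have "0 \<le> \<epsilon> * (\<epsilon> - 2 * p)" using True e by simp
    ultimately show ?thesis by simp
  qed
  moreover have "ddG \<epsilon> / 2 * (p - \<epsilon>)^2 = (p - \<epsilon>)^2 / (2 * (\<epsilon> * (1 - \<epsilon>)))"
    unfolding ddG_def by simp
  ultimately have "(p - \<epsilon>)^2 \<le> 2 * (\<epsilon> * (1 - \<epsilon>)) * Geps \<epsilon> p"
    using pos by (simp add: pos_divide_le_eq) (simp add: algebra_simps)
  then show ?thesis using True \<open>p^2 \<le> (p - \<epsilon>)^2\<close> by simp
qed

lemma pos_bound:
  assumes e: "0 < \<epsilon>" "\<epsilon> < 1/2"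
  shows "(max (p - 1) 0)^2 \<le> 2 * (\<epsilon> * (1 - \<epsilon>)) * Geps \<epsilon> p"
proof (cases "p > 1")
  case False then show ?thesis using Geps_nonneg[OF e, of p] e by simp
next
  case True
  have g1: "1 - ln 2 \<le> G (1 - \<epsilon>)" using e by (auto intro: G_lower)
  have d: "dG (1 - \<epsilon>) > 0" using dG_half e by auto
  have pos: "0 < \<epsilon> * (1 - \<epsilon>)" using e by simp
  have "0 \<le> dG (1 - \<epsilon>) * (p - (1 - \<epsilon>))" using True e d by simp
  hence "ddG (1 - \<epsilon>) / 2 * (p - (1 - \<epsilon>))^2 \<le> Geps \<epsilon> p" using True e g1 ln2_lt1 unfolding Geps_def by simp
  moreover have "(p - 1)^2 \<le> (p - (1 - \<epsilon>))^2"
  proof -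
    have "(p - (1 - \<epsilon>))^2 - (p - 1)^2 = \<epsilon> * (\<epsilon> + 2 * (p - 1))" by (simp add: power2_eq_square algebra_simps)
    moreover have "0 \<le> \<epsilon> * (\<epsilon> + 2 * (p - 1))" using True e by simp
    ultimately show ?thesis by simp
  qed
  moreover have "ddG (1 - \<epsilon>) / 2 * (p - (1 - \<epsilon>))^2 = (p - (1 - \<epsilon>))^2 / (2 * (\<epsilon> * (1 - \<epsilon>)))"
    unfolding ddG_def by (simp add: mult.commute)
  ultimately have "(p - (1 - \<epsilon>))^2 \<le> 2 * (\<epsilon> * (1 - \<epsilon>)) * Geps \<epsilon> p"
    using pos by (simp add: pos_divide_le_eq) (simp add: algebra_simps)
  then show ?thesis using True \<open>(p - 1)^2 \<le> (p - (1 - \<epsilon>))^2\<close> by simp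
qed

lemma MG_nonneg:
  assumes e: "0 < \<epsilon>" "\<epsilon> < 1/2"
  shows "0 \<le> MG \<epsilon> e \<phi> k"
proof -
  let ?a = "\<phi> (fst e)" and ?b = "\<phi> (snd e k)"
  have "0 < Meps \<epsilon> ?a" unfolding Meps_def using e by auto
  moreover have "0 \<le> (?b - ?a) / (dGeps \<epsilon> ?b - dGeps \<epsilon> ?a)"
  proof (cases "?a < ?b")
    case True then show ?thesis using dGeps_strict[OF e True] by simp
  next
    case False
    hence "?b \<le> ?a" by simp
    then show ?thesis using dGeps_mono[OF e \<open>?b \<le> ?a\<close>] by (simp add: divide_nonpos_nonpos)
  qed
  ultimately show ?thesis unfolding MG_def ddGeps_def Let_def by auto
qed

lemma MG_ident:
  assumes e: "0 < \<epsilon>" "\<epsilon> < 1/2"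
  shows "MG \<epsilon> e \<phi> k * (dGeps \<epsilon> (\<phi> (snd e k)) - dGeps \<epsilon> (\<phi> (fst e))) = \<phi> (snd e k) - \<phi> (fst e)"
proof -
  let ?a = "\<phi> (fst e)" and ?b = "\<phi> (snd e k)"
  have "dGeps \<epsilon> ?b \<noteq> dGeps \<epsilon> ?a" if "?b \<noteq> ?a"
    using dGeps_strict[OF e, of ?a ?b] dGeps_strict[OF e, of ?b ?a] that by linarith
  then show ?thesis unfolding MG_def Let_def by auto
qed

lemma Fdw_split: "Fdw \<eta> p = Fc \<eta> p + Fe \<eta> p"
  unfolding Fdw_def Fc_def Fe_def by (cases "\<eta> = 0") (simp_all add: field_simps power2_eq_square power3_eq_cube power4_eq_xxxx)

lemma Fdw_nonneg: "0 \<le> Fdw \<eta> p"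
  unfolding Fdw_def by simp

lemma F_split_ineq:
  assumes "\<eta> > 0"
  shows "Fdw \<eta> x - Fdw \<eta> y \<le> (dFc \<eta> x + dFe \<eta> y) * (x - y)"
proof -
  define u where "u = x - 1/2"
  define h where "h = x - y"
  have c: "(x^4 - 2*x^3 + 3/2*x^2) - (y^4 - 2*y^3 + 3/2*y^2) - (4*x^3 - 6*x^2 + 3*x) * (x - y)
        = - (h^2 * (2*u^2 + (2*u - h)^2))"
    unfolding u_def h_def by (simp add: power2_eq_square power3_eq_cube power4_eq_xxxx algebra_simps)
  have e: "- 1/2 * x^2 + 1/2 * y^2 - (- y) * (x - y) = - (1/2) * h^2"
    unfolding h_def by (simp add: power2_eq_square algebra_simps)
  have "Fdw \<eta> x - Fdw \<eta> y - (dFc \<eta> x + dFe \<eta> y) * (x - y)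
      = 1 / (4 * \<eta>^2) * ((x^4 - 2*x^3 + 3/2*x^2) - (y^4 - 2*y^3 + 3/2*y^2) - (4*x^3 - 6*x^2 + 3*x) * (x - y))
        + 1 / (4 * \<eta>^2) * (- 1/2 * x^2 + 1/2 * y^2 - (- y) * (x - y))"
    unfolding Fdw_split Fc_def Fe_def dFc_def dFe_def using assms by (simp add: field_simps power2_eq_square power3_eq_cube power4_eq_xxxx)
  also have "\<dots> = - (1 / (4 * \<eta>^2) * (h^2 * (2*u^2 + (2*u - h)^2) + 1/2 * h^2))"
    unfolding c e by (simp add: algebra_simps)
  also have "\<dots> \<le> 0"
    by (simp only: neg_le_0_iff_le) (intro mult_nonneg_nonneg add_nonneg_nonneg, auto)
  finally show ?thesis by simp
qed

lemma dFc_mono: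
  assumes "\<eta> > 0"
  shows "0 \<le> (dFc \<eta> b - dFc \<eta> a) * (b - a)"
proof -
  define s where "s = a - 1/2"
  define t where "t = b - 1/2"
  have "(dFc \<eta> b - dFc \<eta> a) * (b - a) = 1 / (4 * \<eta>^2) * ((b - a)^2 * (4 * ((s + t/2)^2 + 3/4 * t^2)))"
    unfolding dFc_def s_def t_def using assms by (simp add: power2_eq_square power3_eq_cube field_simps)
  also have "\<dots> \<ge> 0" by simp
  finally show ?thesis .
qed



lemma A_sym: "grad_ip X Th u v = grad_ip X Th v u"
  unfolding grad_ip_eq by (simp add: inner_commute)

lemma A_add: "grad_ip X Th (\<lambda>v. a v + b v) w = grad_ip X Th a w + grad_ip X Th b w"
  unfolding grad_ip_eq grad_add by (simp add: inner_add_left algebra_simps sum.distrib)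

lemma A_diff: "grad_ip X Th (\<lambda>v. a v - b v) w = grad_ip X Th a w - grad_ip X Th b w"
  unfolding grad_ip_eq grad_diff by (simp add: inner_diff_left algebra_simps sum_subtractf)

lemma A_cmult: "grad_ip X Th (\<lambda>v. c * a v) w = c * grad_ip X Th a w"
  unfolding grad_ip_eq grad_cmult by (simp add: algebra_simps sum_distrib_left)

lemma A_nonneg: "0 \<le> grad_ip X Th u u"
  unfolding grad_ip_eq by (intro sum_nonneg mult_nonneg_nonneg wt_nonneg) simp

lemma A_step: "grad_ip X Th x (\<lambda>v. x v - y v) \<ge> 1/2 * grad_ip X Th x x - 1/2 * grad_ip X Th y y"
proof -
  have "grad_ip X Th x (\<lambda>v. x v - y v) - (1/2 * grad_ip X Th x x - 1/2 * grad_ip X Th y y)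
     = (\<Sum>e\<in>Th. wt X e * (grad X e x \<bullet> grad X e (\<lambda>v. x v - y v)) - (1/2 * (wt X e * (grad X e x \<bullet> grad X e x)) - 1/2 * (wt X e * (grad X e y \<bullet> grad X e y))))"
    unfolding grad_ip_eq by (simp add: sum_subtractf sum_distrib_left)
  also have "\<dots> = (\<Sum>e\<in>Th. wt X e * (1/2 * ((grad X e x - grad X e y) \<bullet> (grad X e x - grad X e y))))"
    unfolding grad_diff
    by (intro sum.cong refl) (simp add: inner_diff_left inner_diff_right inner_commute algebra_simps)
  also have "\<dots> \<ge> 0" by (intro sum_nonneg mult_nonneg_nonneg wt_nonneg) auto
  finally show ?thesis by simp
qed

lemma A_cs: "grad_ip X Th y x \<le> 1/2 * (grad_ip X Th x x + grad_ip X Th y y)"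
proof -
  have "(grad_ip X Th x x + grad_ip X Th y y) - 2 * grad_ip X Th y x
     = (\<Sum>e\<in>Th. wt X e * (grad X e x \<bullet> grad X e x) + wt X e * (grad X e y \<bullet> grad X e y) - 2 * (wt X e * (grad X e y \<bullet> grad X e x)))"
    unfolding grad_ip_eq by (simp add: sum_subtractf sum_distrib_left sum.distrib)
  also have "\<dots> = (\<Sum>e\<in>Th. wt X e * ((grad X e x - grad X e y) \<bullet> (grad X e x - grad X e y)))"
    by (intro sum.cong refl) (simp add: inner_diff_left inner_diff_right inner_commute algebra_simps)
  also have "\<dots> \<ge> 0" by (intro sum_nonneg mult_nonneg_nonneg wt_nonneg) auto
  finally show ?thesis by simp
qed

lemma A_dFc:
  assumes "\<eta> > 0"
  shows "0 \<le> grad_ip X Th (\<lambda>v. dFc \<eta> (x v)) x"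
  unfolding grad_ip_eq
proof (rule sum_nonneg)
  fix e assume "e \<in> Th"
  have "grad X e (\<lambda>v. dFc \<eta> (x v)) \<bullet> grad X e x
    = (\<Sum>k\<in>UNIV. (dFc \<eta> (x (snd e k)) - dFc \<eta> (x (fst e))) * (x (snd e k) - x (fst e)) / (edge_len X e k)^2)"
    unfolding grad_def inner_vec_def by (simp add: power2_eq_square)
  also have "\<dots> \<ge> 0" using dFc_mono[OF assms] by (intro sum_nonneg divide_nonneg_nonneg) auto
  finally show "0 \<le> wt X e * (grad X e (\<lambda>v. dFc \<eta> (x v)) \<bullet> grad X e x)"
    by (intro mult_nonneg_nonneg wt_nonneg)
qed

lemma A_dFe: "grad_ip X Th (\<lambda>v. dFe \<eta> (y v)) x = - 1 / (4 * \<eta>^2) * grad_ip X Th y x"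
  unfolding dFe_def A_cmult ..

lemma mob_G:
  assumes e: "0 < \<epsilon>" "\<epsilon> < 1/2"
  shows "mob_ip X Th \<epsilon> x \<mu> (\<lambda>v. dGeps \<epsilon> (x v)) = grad_ip X Th \<mu> x"
  unfolding mob_ip_eq grad_ip_eq
proof (rule sum.cong[OF refl])
  fix e assume "e \<in> Th"
  have "(\<Sum>k\<in>UNIV. MG \<epsilon> e x k * grad X e \<mu> $ k * grad X e (\<lambda>v. dGeps \<epsilon> (x v)) $ k) = grad X e \<mu> \<bullet> grad X e x"
    unfolding inner_vec_def
  proof (intro sum.cong refl)
    fix k
    have "MG \<epsilon> e x k * grad X e (\<lambda>v. dGeps \<epsilon> (x v)) $ k = grad X e x $ k"
      unfolding grad_def using MG_ident[OF e, of e x k] by (simp add: times_divide_eq_right)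
    then show "MG \<epsilon> e x k * grad X e \<mu> $ k * grad X e (\<lambda>v. dGeps \<epsilon> (x v)) $ k = grad X e \<mu> $ k \<bullet> grad X e x $ k"
      by (simp add: ac_simps)
  qed
  then show "wt X e * (\<Sum>k\<in>UNIV. MG \<epsilon> e x k * grad X e \<mu> $ k * grad X e (\<lambda>v. dGeps \<epsilon> (x v)) $ k) = wt X e * (grad X e \<mu> \<bullet> grad X e x)"
    by simp
qed

lemma mob_nonneg:
  assumes e: "0 < \<epsilon>" "\<epsilon> < 1/2"
  shows "0 \<le> mob_ip X Th \<epsilon> x \<mu> \<mu>"
  unfolding mob_ip_eq
proof (rule sum_nonneg)
  fix el assume "el \<in> Th"
  have "0 \<le> MG \<epsilon> el x k * grad X el \<mu> $ k * grad X el \<mu> $ k" for k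
  proof -
  have "0 \<le> MG \<epsilon> el x k * (grad X el \<mu> $ k * grad X el \<mu> $ k)" by (rule mult_nonneg_nonneg[OF MG_nonneg[OF e]]) simp
  then show ?thesis by (simp add: mult.assoc)
  qed
  then show "0 \<le> wt X el * (\<Sum>k\<in>UNIV. MG \<epsilon> el x k * grad X el \<mu> $ k * grad X el \<mu> $ k)"
    by (intro mult_nonneg_nonneg[OF wt_nonneg] sum_nonneg) auto
qed



lemma int_h_zero: "int_h X Th (\<lambda>_. 0) = 0"
  using int_h_const[of X Th 0] by simp

lemma int_h_nonneg:
  assumes "\<And>e. e \<in> Th \<Longrightarrow> structured_elem X e" "\<And>v. 0 \<le> a v"
  shows "0 \<le> int_h X Th a"
proof -
  have "int_h X Th (\<lambda>_. 0) \<le> int_h X Th a" by (rule int_h_mono) (use assms in auto)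
  thus ?thesis by (simp add: int_h_zero)
qed

lemma step_energy:
  fixes x y \<mu> :: "nat \<Rightarrow> real"
  assumes mesh: "\<And>e. e \<in> Th \<Longrightarrow> structured_elem X e"
    and e: "0 < \<epsilon>" "\<epsilon> < 1/2" and eta: "\<eta> > 0" and dt: "dt > 0"
    and eq1: "\<And>\<psi>. 1 / dt * ip_h X Th (\<lambda>v. x v - y v) \<psi> + mob_ip X Th \<epsilon> x \<mu> \<psi> = 0"
    and eq2: "\<And>\<psi>. grad_ip X Th x \<psi> + ip_h X Th (\<lambda>v. dFc \<eta> (x v) + dFe \<eta> (y v)) \<psi> = ip_h X Th \<mu> \<psi>"
  shows "1/2 * grad_ip X Th x x + int_h X Th (\<lambda>v. Fdw \<eta> (x v))
           \<le> 1/2 * grad_ip X Th y y + int_h X Th (\<lambda>v. Fdw \<eta> (y v))"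
proof -
  define f where "f = (\<lambda>v. dFc \<eta> (x v) + dFe \<eta> (y v))"
  define \<delta> where "\<delta> = (\<lambda>v. x v - y v)"
  have h2: "grad_ip X Th x \<delta> + int_h X Th (\<lambda>v. f v * \<delta> v) = int_h X Th (\<lambda>v. \<mu> v * \<delta> v)"
    using eq2[of \<delta>] unfolding ip_h_def f_def by simp
  have h1: "1 / dt * int_h X Th (\<lambda>v. \<delta> v * \<mu> v) + mob_ip X Th \<epsilon> x \<mu> \<mu> = 0"
    using eq1[of \<mu>] unfolding ip_h_def \<delta>_def by simp
  have c: "int_h X Th (\<lambda>v. \<mu> v * \<delta> v) = int_h X Th (\<lambda>v. \<delta> v * \<mu> v)"
    by (simp add: mult.commute)
  have "int_h X Th (\<lambda>v. \<delta> v * \<mu> v) = - dt * mob_ip X Th \<epsilon> x \<mu> \<mu>"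
    using h1 dt by (simp add: field_simps)
  hence neg: "int_h X Th (\<lambda>v. \<mu> v * \<delta> v) \<le> 0"
    using c mob_nonneg[OF e, of X Th x \<mu>] dt by (simp add: mult_nonneg_nonneg)
  have "int_h X Th (\<lambda>v. Fdw \<eta> (x v)) - int_h X Th (\<lambda>v. Fdw \<eta> (y v))
      = int_h X Th (\<lambda>v. Fdw \<eta> (x v) - Fdw \<eta> (y v))" by (rule int_h_diff[symmetric])
  also have "\<dots> \<le> int_h X Th (\<lambda>v. f v * \<delta> v)"
    by (rule int_h_mono[OF mesh]) (auto simp: f_def \<delta>_def F_split_ineq[OF eta])
  finally have F: "int_h X Th (\<lambda>v. Fdw \<eta> (x v)) - int_h X Th (\<lambda>v. Fdw \<eta> (y v)) \<le> int_h X Th (\<lambda>v. f v * \<delta> v)" .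
  have As: "grad_ip X Th x \<delta> \<ge> 1/2 * grad_ip X Th x x - 1/2 * grad_ip X Th y y"
    unfolding \<delta>_def by (rule A_step)
  show ?thesis using h2 neg F As by linarith
qed

lemma step_entropy:
  fixes x y \<mu> :: "nat \<Rightarrow> real"
  assumes mesh: "\<And>e. e \<in> Th \<Longrightarrow> structured_elem X e"
    and e: "0 < \<epsilon>" "\<epsilon> < 1/2" and eta: "\<eta> > 0" and dt: "dt > 0"
    and eq1: "\<And>\<psi>. 1 / dt * ip_h X Th (\<lambda>v. x v - y v) \<psi> + mob_ip X Th \<epsilon> x \<mu> \<psi> = 0"
    and eq2: "\<And>\<psi>. grad_ip X Th x \<psi> + ip_h X Th (\<lambda>v. dFc \<eta> (x v) + dFe \<eta> (y v)) \<psi> = ip_h X Th \<mu> \<psi>"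
  shows "int_h X Th (\<lambda>v. Geps \<epsilon> (x v)) - int_h X Th (\<lambda>v. Geps \<epsilon> (y v))
           \<le> dt / (8 * \<eta>^2) * (grad_ip X Th x x + grad_ip X Th y y)"
proof -
  define f where "f = (\<lambda>v. dFc \<eta> (x v) + dFe \<eta> (y v))"
  define \<delta> where "\<delta> = (\<lambda>v. x v - y v)"
  define c where "c = 1 / (4 * \<eta>^2)"
  have cpos: "c > 0" using eta by (simp add: c_def)
  have h1: "1 / dt * int_h X Th (\<lambda>v. \<delta> v * dGeps \<epsilon> (x v)) + grad_ip X Th \<mu> x = 0"
    using eq1[of "\<lambda>v. dGeps \<epsilon> (x v)"] unfolding ip_h_def \<delta>_def mob_G[OF e] by simp
  hence L1: "int_h X Th (\<lambda>v. \<delta> v * dGeps \<epsilon> (x v)) = - dt * grad_ip X Th \<mu> x"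
    using dt by (simp add: field_simps)
  have "int_h X Th (\<lambda>v. Geps \<epsilon> (x v)) - int_h X Th (\<lambda>v. Geps \<epsilon> (y v))
      = int_h X Th (\<lambda>v. Geps \<epsilon> (x v) - Geps \<epsilon> (y v))" by (rule int_h_diff[symmetric])
  also have "\<dots> \<le> int_h X Th (\<lambda>v. \<delta> v * dGeps \<epsilon> (x v))"
    by (rule int_h_mono[OF mesh]) (auto simp: \<delta>_def Geps_conv[OF e] mult.commute)
  finally have G1: "int_h X Th (\<lambda>v. Geps \<epsilon> (x v)) - int_h X Th (\<lambda>v. Geps \<epsilon> (y v)) \<le> - dt * grad_ip X Th \<mu> x"
    using L1 by simp
  define r where "r = (\<lambda>v. \<mu> v - f v)"
  have h2: "grad_ip X Th x r + int_h X Th (\<lambda>v. f v * r v) = int_h X Th (\<lambda>v. \<mu> v * r v)"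
    using eq2[of r] unfolding ip_h_def f_def by simp
  have "int_h X Th (\<lambda>v. \<mu> v * r v) - int_h X Th (\<lambda>v. f v * r v) = int_h X Th (\<lambda>v. \<mu> v * r v - f v * r v)"
    by (rule int_h_diff[symmetric])
  also have "\<dots> = int_h X Th (\<lambda>v. r v * r v)" by (simp add: r_def algebra_simps)
  also have "\<dots> \<ge> 0" by (rule int_h_nonneg) (auto intro: mesh)
  finally have "grad_ip X Th x r \<ge> 0" using h2 by simp
  hence "grad_ip X Th r x \<ge> 0" by (simp add: A_sym)
  hence Amu: "grad_ip X Th \<mu> x \<ge> grad_ip X Th f x" unfolding r_def A_diff by simp
  have "grad_ip X Th f x = grad_ip X Th (\<lambda>v. dFc \<eta> (x v)) x + grad_ip X Th (\<lambda>v. dFe \<eta> (y v)) x"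
    unfolding f_def by (rule A_add)
  also have "\<dots> \<ge> 0 + (- c * grad_ip X Th y x)"
    unfolding A_dFe c_def using A_dFc[OF eta, of X Th x] by simp
  finally have "grad_ip X Th \<mu> x \<ge> - c * grad_ip X Th y x" using Amu by simp
  hence m: "dt * (- (c * grad_ip X Th y x)) \<le> dt * grad_ip X Th \<mu> x"
    using dt by (intro mult_left_mono) auto
  have "- dt * grad_ip X Th \<mu> x \<le> dt * (c * grad_ip X Th y x)"
    using m by (simp only: mult_minus_left mult_minus_right)
  also have "\<dots> \<le> dt * (c * (1/2 * (grad_ip X Th x x + grad_ip X Th y y)))"
    using A_cs[of X Th y x] cpos dt by (intro mult_left_mono) auto
  also have "\<dots> = dt / (8 * \<eta>^2) * (grad_ip X Th x x + grad_ip X Th y y)"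
    unfolding c_def by (simp add: field_simps)
  finally show ?thesis using G1 by linarith
qed



lemma Fdw_upper:
  assumes "\<bar>p\<bar> \<le> M"
  shows "Fdw \<eta> p \<le> M^2 * (M + 1)^2 / (4 * \<eta>^2)"
proof -
  have M0: "0 \<le> M" using assms by linarith
  have "p^2 \<le> M^2" using assms M0 abs_le_square_iff[of p M] by simp
  moreover have "(p - 1)^2 \<le> (M + 1)^2"
  proof -
    have "\<bar>p - 1\<bar> \<le> M + 1" using assms by linarith
    thus ?thesis using M0 abs_le_square_iff[of "p - 1" "M + 1"] by simp
  qed
  ultimately have "p^2 * (p - 1)^2 \<le> M^2 * (M + 1)^2" by (intro mult_mono) auto
  thus ?thesis unfolding Fdw_def by (simp add: divide_right_mono)
qed

lemma Fdw_lower: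
  assumes "M/2 \<le> \<bar>p\<bar>" "4 \<le> M" "\<eta> > 0"
  shows "M^4 / (256 * \<eta>^2) \<le> Fdw \<eta> p"
proof -
  define q where "q = \<bar>p\<bar>"
  have q2: "2 \<le> q" "M/2 \<le> q" using assms by (auto simp: q_def)
  have "p^2 = q^2" by (simp add: q_def)
  have "q - 1 \<le> \<bar>p - 1\<bar>" unfolding q_def by linarith
  hence "(q - 1)^2 \<le> (p - 1)^2" using q2 abs_le_square_iff[of "q - 1" "p - 1"] by simp
  moreover have "(q/2)^2 \<le> (q - 1)^2" using q2 by (intro power_mono) auto
  ultimately have a: "(q/2)^2 \<le> (p - 1)^2" by simp
  have b: "(M/2)^2 \<le> q^2" using q2 assms by (intro power_mono) auto
  have c: "(M/4)^2 \<le> (q/2)^2" using q2 assms by (intro power_mono) auto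
  have "(M/2)^2 * (M/4)^2 \<le> p^2 * (p - 1)^2"
    using a b c \<open>p^2 = q^2\<close> by (intro mult_mono) auto
  moreover have "(M/2)^2 * (M/4)^2 = M^4 / 64" by (simp add: power2_eq_square power4_eq_xxxx)
  ultimately have "M^4 / 64 \<le> p^2 * (p - 1)^2" by simp
  hence "M^4 / 64 / (4 * \<eta>^2) \<le> p^2 * (p - 1)^2 / (4 * \<eta>^2)" using assms by (intro divide_right_mono) auto
  thus ?thesis unfolding Fdw_def by simp
qed

lemma elem_F_bound:
  fixes X :: "nat \<Rightarrow> real^'d::finite"
  assumes se: "structured_elem X e" and eta: "\<eta> > 0" and d3: "CARD('d) \<le> 3"
  shows "integral (elem_set X e) (P1 X e (\<lambda>v. Fdw \<eta> (\<phi> v)))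
           \<le> 6400 * integral (elem_set X e) (\<lambda>y. Fdw \<eta> (P1 X e \<phi> y)) + 100 / \<eta>^2 * wt X e"
proof -
  define S where "S = elem_set X e"
  define M where "M = Max ((\<lambda>v. \<bar>\<phi> v\<bar>) ` verts e)"
  have fin: "finite ((\<lambda>v. \<bar>\<phi> v\<bar>) ` verts e)" by (simp add: finite_verts)
  have ne: "(\<lambda>v. \<bar>\<phi> v\<bar>) ` verts e \<noteq> {}" by (simp add: verts_def)
  have Mge: "\<And>v. v \<in> verts e \<Longrightarrow> \<bar>\<phi> v\<bar> \<le> M" unfolding M_def using fin by auto
  obtain v0 where v0: "v0 \<in> verts e" "\<bar>\<phi> v0\<bar> = M"
    using Max_in[OF fin ne] unfolding M_def by auto
  have M0: "0 \<le> M" using v0 by auto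
  define K where "K = M^2 * (M + 1)^2 / (4 * \<eta>^2)"
  have wt0: "0 \<le> wt X e" by (rule wt_nonneg)
  have intK: "(\<lambda>_. K) integrable_on S" unfolding S_def by (intro cont_int compact_elem continuous_intros)
  have LHS: "integral S (P1 X e (\<lambda>v. Fdw \<eta> (\<phi> v))) \<le> K * wt X e"
  proof -
    have "integral S (P1 X e (\<lambda>v. Fdw \<eta> (\<phi> v))) \<le> integral S (\<lambda>_. K)"
    proof (rule integral_le)
      show "P1 X e (\<lambda>v. Fdw \<eta> (\<phi> v)) integrable_on S" unfolding S_def by (rule int_P1)
      show "(\<lambda>_. K) integrable_on S" by (rule intK)
      fix y assume "y \<in> S"
      have "P1 X e (\<lambda>v. Fdw \<eta> (\<phi> v)) y \<le> P1 X e (\<lambda>_. K) y"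
        by (rule P1_mono[OF se]) (use \<open>y \<in> S\<close> S_def Mge Fdw_upper K_def in auto)
      thus "P1 X e (\<lambda>v. Fdw \<eta> (\<phi> v)) y \<le> K" by (simp add: P1_const)
    qed
    thus ?thesis unfolding S_def integral_const_wt by simp
  qed
  have cF: "continuous_on UNIV (Fdw \<eta>)" unfolding Fdw_def[abs_def] by (intro continuous_intros)
  have intF: "(\<lambda>y. Fdw \<eta> (P1 X e \<phi> y)) integrable_on S"
    unfolding S_def by (rule int_comp[OF cF])
  have I0: "0 \<le> integral S (\<lambda>y. Fdw \<eta> (P1 X e \<phi> y))"
    by (rule integral_nonneg[OF intF]) (simp add: Fdw_nonneg)
  show ?thesis
  proof (cases "M \<le> 4")
    case True
    have "M^2 * (M + 1)^2 \<le> 4^2 * 5^2" using True M0 by (intro mult_mono power_mono) auto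
    hence "K \<le> 400 / (4 * \<eta>^2)" unfolding K_def by (intro divide_right_mono) auto
    also have "\<dots> = 100 / \<eta>^2" by simp
    finally have "K * wt X e \<le> 100 / \<eta>^2 * wt X e" using wt0 by (intro mult_right_mono) auto
    then show ?thesis using LHS I0 unfolding S_def by linarith
  next
    case False
    hence M4: "4 \<le> M" by simp
    define z where "z = X v0"
    have zS: "z \<in> S" unfolding S_def elem_set_def z_def using v0 by (intro hull_inc) auto
    define T where "T = (\<lambda>y::real^'d. (1/4) *\<^sub>R y + (3/4) *\<^sub>R z)"
    have T_eq: "T y = (1 - 1/4) *\<^sub>R z + (1/4) *\<^sub>R y" for y by (simp add: T_def)
    have TS: "T ` S \<subseteq> S"
    proof
      fix w assume "w \<in> T ` S"
      then obtain y where y: "y \<in> S" "w = T y" by auto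
      have "(1 - 1/4) *\<^sub>R z + (1/4) *\<^sub>R y \<in> S"
        using convexD[OF convex_elem[of X e, folded S_def] zS y(1), of "1 - 1/4" "1/4"] by simp
      thus "w \<in> S" using y T_eq by simp
    qed
    have cT: "compact (T ` S)" unfolding T_def S_def
      by (intro compact_continuous_image compact_elem continuous_intros)
    have intF': "(\<lambda>y. Fdw \<eta> (P1 X e \<phi> y)) integrable_on T ` S"
      by (rule cont_int[OF cT]) (rule continuous_on_compose2[OF cF cont_P1[of "T ` S" X e \<phi>]], auto)
    define c where "c = M^4 / (256 * \<eta>^2)"
    have intc: "(\<lambda>_. c) integrable_on T ` S" by (intro cont_int[OF cT] continuous_intros)
    have low: "c \<le> Fdw \<eta> (P1 X e \<phi> w)" if wT: "w \<in> T ` S" for w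
    proof -
      obtain y where y: "y \<in> S" "w = T y" using wT by auto
      have "P1 X e \<phi> y \<le> P1 X e (\<lambda>_. M) y" "P1 X e (\<lambda>_. - M) y \<le> P1 X e \<phi> y"
        using Mge y(1) unfolding S_def by (auto intro!: P1_mono[OF se] dest!: Mge simp: abs_le_iff)
      hence hby: "\<bar>P1 X e \<phi> y\<bar> \<le> M" by (simp add: P1_const)
      have "P1 X e \<phi> w = (1 - 1/4) * \<phi> v0 + 1/4 * P1 X e \<phi> y"
        unfolding y(2) T_eq P1_affine P1_vert[OF se v0(1)] z_def by simp
      hence "M/2 \<le> \<bar>P1 X e \<phi> w\<bar>" using hby v0(2) by (auto simp: abs_if split: if_splits)
      then show ?thesis unfolding c_def by (rule Fdw_lower[OF _ M4 eta])
    qed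
    have "integral (T ` S) (\<lambda>_. c) \<le> integral (T ` S) (\<lambda>y. Fdw \<eta> (P1 X e \<phi> y))"
      by (rule integral_le[OF intc intF']) (rule low)
    also have "\<dots> \<le> integral S (\<lambda>y. Fdw \<eta> (P1 X e \<phi> y))"
      by (rule integral_subset_le[OF TS intF' intF]) (simp add: Fdw_nonneg)
    finally have i1: "integral (T ` S) (\<lambda>_. c) \<le> integral S (\<lambda>y. Fdw \<eta> (P1 X e \<phi> y))" .
    have mS: "measure lebesgue S = wt X e"
      unfolding wt_def S_def by (rule lmeasure_integral) (intro lmeasurable_compact compact_elem)
    have "integral (T ` S) (\<lambda>_. c) = c * measure lebesgue (T ` S)"
      using integral_const_mult[of "T ` S" c "\<lambda>_. 1"] lmeasure_integral[OF lmeasurable_compact[OF cT]] by simp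
    also have "measure lebesgue (T ` S) = (1/4)^CARD('d) * wt X e"
      unfolding T_def using measure_lebesgue_affine[of "1/4" "(3/4) *\<^sub>R z" S] mS by simp
    finally have i2: "integral (T ` S) (\<lambda>_. c) = c * ((1/4)^CARD('d) * wt X e)" .
    have "(1/4::real)^3 \<le> (1/4)^CARD('d)" using d3 by (intro power_decreasing) auto
    hence "c * ((1/4)^3 * wt X e) \<le> c * ((1/4)^CARD('d) * wt X e)"
      using wt0 unfolding c_def by (intro mult_left_mono mult_right_mono) auto
    moreover have "c * ((1/4)^3 * wt X e) = c / 64 * wt X e" by (simp add: power3_eq_cube)
    ultimately have low2: "c / 64 * wt X e \<le> integral S (\<lambda>y. Fdw \<eta> (P1 X e \<phi> y))" using i1 i2 by linarith
    have "(M + 1)^2 \<le> (5/4 * M)^2" using M4 by (intro power_mono) auto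
    hence "M^2 * (M + 1)^2 \<le> M^2 * (5/4 * M)^2" by (intro mult_left_mono) auto
    hence "K \<le> M^2 * (5/4 * M)^2 / (4 * \<eta>^2)" unfolding K_def by (intro divide_right_mono) auto
    also have "\<dots> = 6400 * (c / 64)" unfolding c_def by (simp add: power2_eq_square power4_eq_xxxx field_simps)
    finally have "K * wt X e \<le> 6400 * (c / 64) * wt X e" using wt0 by (intro mult_right_mono)
    also have "\<dots> \<le> 6400 * integral S (\<lambda>y. Fdw \<eta> (P1 X e \<phi> y))" using low2 by simp
    finally show ?thesis using LHS wt0 eta unfolding S_def by (smt (verit) divide_nonneg_nonneg mult_nonneg_nonneg zero_le_power2)
  qed
qed



definition Eh where "Eh X Th \<eta> u = 1/2 * grad_ip X Th u u + int_h X Th (\<lambda>v. Fdw \<eta> (u v))"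

lemma Eh_nonneg:
  assumes mesh: "\<And>e. e \<in> Th \<Longrightarrow> structured_elem X e"
  shows "0 \<le> Eh X Th \<eta> u" and "grad_ip X Th u u \<le> 2 * Eh X Th \<eta> u"
proof -
  have "0 \<le> int_h X Th (\<lambda>v. Fdw \<eta> (u v))" by (rule int_h_nonneg[OF mesh]) (auto simp: Fdw_nonneg)
  then show "0 \<le> Eh X Th \<eta> u" "grad_ip X Th u u \<le> 2 * Eh X Th \<eta> u"
    using A_nonneg[of X Th u] unfolding Eh_def by auto
qed

lemma scheme_decay:
  assumes mesh: "\<And>e. e \<in> Th \<Longrightarrow> structured_elem X e"
    and e: "0 < \<epsilon>" "\<epsilon> < 1/2" and eta: "\<eta> > 0" and dt: "dt > 0"
    and sch: "Geps_scheme X Th \<eta> \<epsilon> dt N \<phi> \<mu>"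
  shows "k \<le> N \<Longrightarrow> Eh X Th \<eta> (\<phi> k) \<le> Eh X Th \<eta> (\<phi> 0)
          \<and> int_h X Th (\<lambda>v. Geps \<epsilon> (\<phi> k v)) \<le> int_h X Th (\<lambda>v. Geps \<epsilon> (\<phi> 0 v)) + real k * dt * Eh X Th \<eta> (\<phi> 0) / (2 * \<eta>^2)"
proof (induction k)
  case 0 then show ?case by simp
next
  case (Suc k)
  hence kN: "k < N" by simp
  from Suc have IH: "Eh X Th \<eta> (\<phi> k) \<le> Eh X Th \<eta> (\<phi> 0)"
    "int_h X Th (\<lambda>v. Geps \<epsilon> (\<phi> k v)) \<le> int_h X Th (\<lambda>v. Geps \<epsilon> (\<phi> 0 v)) + real k * dt * Eh X Th \<eta> (\<phi> 0) / (2 * \<eta>^2)"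
    by auto
  have eq1: "\<And>\<psi>. 1 / dt * ip_h X Th (\<lambda>v. \<phi> (Suc k) v - \<phi> k v) \<psi> + mob_ip X Th \<epsilon> (\<phi> (Suc k)) (\<mu> (Suc k)) \<psi> = 0"
    and eq2: "\<And>\<psi>. grad_ip X Th (\<phi> (Suc k)) \<psi> + ip_h X Th (\<lambda>v. dFc \<eta> (\<phi> (Suc k) v) + dFe \<eta> (\<phi> k v)) \<psi> = ip_h X Th (\<mu> (Suc k)) \<psi>"
    using sch kN unfolding Geps_scheme_def by auto
  have E1: "Eh X Th \<eta> (\<phi> (Suc k)) \<le> Eh X Th \<eta> (\<phi> k)"
    unfolding Eh_def by (rule step_energy[OF mesh e eta dt eq1 eq2])
  have G1: "int_h X Th (\<lambda>v. Geps \<epsilon> (\<phi> (Suc k) v)) - int_h X Th (\<lambda>v. Geps \<epsilon> (\<phi> k v))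
      \<le> dt / (8 * \<eta>^2) * (grad_ip X Th (\<phi> (Suc k)) (\<phi> (Suc k)) + grad_ip X Th (\<phi> k) (\<phi> k))"
    by (rule step_entropy[OF mesh e eta dt eq1 eq2])
  have "grad_ip X Th (\<phi> (Suc k)) (\<phi> (Suc k)) + grad_ip X Th (\<phi> k) (\<phi> k) \<le> 4 * Eh X Th \<eta> (\<phi> 0)"
  proof -
    have "grad_ip X Th (\<phi> (Suc k)) (\<phi> (Suc k)) \<le> 2 * Eh X Th \<eta> (\<phi> (Suc k))"
      "grad_ip X Th (\<phi> k) (\<phi> k) \<le> 2 * Eh X Th \<eta> (\<phi> k)"
      by (rule Eh_nonneg(2), rule mesh, assumption)+
    then show ?thesis using E1 IH(1) by linarith
  qed
  hence "dt / (8 * \<eta>^2) * (grad_ip X Th (\<phi> (Suc k)) (\<phi> (Suc k)) + grad_ip X Th (\<phi> k) (\<phi> k))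
      \<le> dt / (8 * \<eta>^2) * (4 * Eh X Th \<eta> (\<phi> 0))"
    using dt eta by (intro mult_left_mono) auto
  also have "\<dots> = dt * Eh X Th \<eta> (\<phi> 0) / (2 * \<eta>^2)" using eta by (simp add: field_simps)
  finally have G2: "int_h X Th (\<lambda>v. Geps \<epsilon> (\<phi> (Suc k) v)) \<le> int_h X Th (\<lambda>v. Geps \<epsilon> (\<phi> k v)) + dt * Eh X Th \<eta> (\<phi> 0) / (2 * \<eta>^2)"
    using G1 by linarith
  have "real (Suc k) * dt * Eh X Th \<eta> (\<phi> 0) / (2 * \<eta>^2) = real k * dt * Eh X Th \<eta> (\<phi> 0) / (2 * \<eta>^2) + dt * Eh X Th \<eta> (\<phi> 0) / (2 * \<eta>^2)"
    by (simp add: add_divide_distrib[symmetric] algebra_simps)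
  then show ?case using G2 IH E1 by linarith
qed

lemma init_bound:
  fixes X :: "nat \<Rightarrow> real^'d::finite"
  assumes mesh: "\<And>e. e \<in> Th \<Longrightarrow> structured_elem X e"
    and e: "0 < \<epsilon>" "\<epsilon> < 1/2" and eta: "\<eta> > 0" and d3: "CARD('d) \<le> 3"
  shows "Eh X Th \<eta> \<phi> \<le> 6400 * energy X Th \<eta> \<phi> + 100 / (\<eta>^2 * (1 - ln 2)) * int_h X Th (\<lambda>v. Geps \<epsilon> (\<phi> v))"
proof -
  have cF: "continuous_on UNIV (Fdw \<eta>)" unfolding Fdw_def[abs_def] by (intro continuous_intros)
  have en: "energy X Th \<eta> \<phi> = (\<Sum>e\<in>Th. 1/2 * (wt X e * (grad X e \<phi> \<bullet> grad X e \<phi>)) + integral (elem_set X e) (\<lambda>y. Fdw \<eta> (P1 X e \<phi> y)))"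
    unfolding energy_def
  proof (rule sum.cong[OF refl])
    fix el assume "el \<in> Th"
    have "integral (elem_set X el) (\<lambda>y. 1/2 * (norm (grad X el \<phi>))^2 + Fdw \<eta> (P1 X el \<phi> y))
        = integral (elem_set X el) (\<lambda>y. 1/2 * (norm (grad X el \<phi>))^2) + integral (elem_set X el) (\<lambda>y. Fdw \<eta> (P1 X el \<phi> y))"
      by (rule integral_add) (intro cont_int compact_elem continuous_intros, rule int_comp[OF cF])
    also have "integral (elem_set X el) (\<lambda>y. 1/2 * (norm (grad X el \<phi>))^2) = 1/2 * (wt X el * (grad X el \<phi> \<bullet> grad X el \<phi>))"
      unfolding integral_const_wt by (simp add: power2_norm_eq_inner)
    finally show "integral (elem_set X el) (\<lambda>y. 1/2 * (norm (grad X el \<phi>))^2 + Fdw \<eta> (P1 X el \<phi> y))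
        = 1/2 * (wt X el * (grad X el \<phi> \<bullet> grad X el \<phi>)) + integral (elem_set X el) (\<lambda>y. Fdw \<eta> (P1 X el \<phi> y))" .
  qed
  have ehs: "Eh X Th \<eta> \<phi> = (\<Sum>e\<in>Th. 1/2 * (wt X e * (grad X e \<phi> \<bullet> grad X e \<phi>)) + integral (elem_set X e) (P1 X e (\<lambda>v. Fdw \<eta> (\<phi> v))))"
    unfolding Eh_def grad_ip_eq int_h_def by (simp add: sum.distrib sum_distrib_left)
  have "Eh X Th \<eta> \<phi> \<le> (\<Sum>e\<in>Th. 6400 * (1/2 * (wt X e * (grad X e \<phi> \<bullet> grad X e \<phi>)) + integral (elem_set X e) (\<lambda>y. Fdw \<eta> (P1 X e \<phi> y))) + 100 / \<eta>^2 * wt X e)"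
    unfolding ehs
  proof (rule sum_mono)
    fix el assume el: "el \<in> Th"
    have "0 \<le> wt X el * (grad X el \<phi> \<bullet> grad X el \<phi>)" by (intro mult_nonneg_nonneg wt_nonneg) simp
    then show "1/2 * (wt X el * (grad X el \<phi> \<bullet> grad X el \<phi>)) + integral (elem_set X el) (P1 X el (\<lambda>v. Fdw \<eta> (\<phi> v)))
      \<le> 6400 * (1/2 * (wt X el * (grad X el \<phi> \<bullet> grad X el \<phi>)) + integral (elem_set X el) (\<lambda>y. Fdw \<eta> (P1 X el \<phi> y))) + 100 / \<eta>^2 * wt X el"
      using elem_F_bound[OF mesh[OF el] eta d3, of \<phi>] unfolding distrib_left by linarith
  qed
  also have "\<dots> = 6400 * energy X Th \<eta> \<phi> + 100 / \<eta>^2 * (\<Sum>e\<in>Th. wt X e)"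
    unfolding en by (simp add: sum.distrib sum_distrib_left)
  finally have E1: "Eh X Th \<eta> \<phi> \<le> 6400 * energy X Th \<eta> \<phi> + 100 / \<eta>^2 * (\<Sum>e\<in>Th. wt X e)" .
  have "(1 - ln 2) * (\<Sum>e\<in>Th. wt X e) = int_h X Th (\<lambda>_. 1 - ln 2)" by (simp add: int_h_const)
  also have "\<dots> \<le> int_h X Th (\<lambda>v. Geps \<epsilon> (\<phi> v))"
    by (rule int_h_mono[OF mesh]) (auto intro: Geps_lower[OF e])
  finally have "(\<Sum>e\<in>Th. wt X e) \<le> int_h X Th (\<lambda>v. Geps \<epsilon> (\<phi> v)) / (1 - ln 2)"
    using ln2_lt1 by (simp add: pos_le_divide_eq mult.commute)
  hence "100 / \<eta>^2 * (\<Sum>e\<in>Th. wt X e) \<le> 100 / \<eta>^2 * (int_h X Th (\<lambda>v. Geps \<epsilon> (\<phi> v)) / (1 - ln 2))"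
    using eta by (intro mult_left_mono) auto
  also have "\<dots> = 100 / (\<eta>^2 * (1 - ln 2)) * int_h X Th (\<lambda>v. Geps \<epsilon> (\<phi> v))" by simp
  finally show ?thesis using E1 by linarith
qed



lemma sq_bound:
  assumes mesh: "\<And>e. e \<in> Th \<Longrightarrow> structured_elem X e"
    and e: "0 < \<epsilon>" "\<epsilon> < 1/2"
    and u: "\<And>v. (u v)^2 \<le> 2 * (\<epsilon> * (1 - \<epsilon>)) * Geps \<epsilon> (x v)"
  shows "(\<Sum>e\<in>Th. integral (elem_set X e) (\<lambda>y. (P1 X e u y)^2))
          \<le> 2 * (\<epsilon> * (1 - \<epsilon>)) * int_h X Th (\<lambda>v. Geps \<epsilon> (x v))"
proof -
  have "(\<Sum>e\<in>Th. integral (elem_set X e) (\<lambda>y. (P1 X e u y)^2)) \<le> int_h X Th (\<lambda>v. (u v)^2)"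
    unfolding int_h_def
  proof (rule sum_mono)
    fix el assume el: "el \<in> Th"
    have cs: "continuous_on UNIV (\<lambda>p::real. p^2)" by (intro continuous_intros)
    show "integral (elem_set X el) (\<lambda>y. (P1 X el u y)^2) \<le> integral (elem_set X el) (P1 X el (\<lambda>v. (u v)^2))"
      by (rule integral_le[OF int_comp[OF cs] int_P1]) (rule P1_jensen[OF mesh[OF el]])
  qed
  also have "\<dots> \<le> int_h X Th (\<lambda>v. 2 * (\<epsilon> * (1 - \<epsilon>)) * Geps \<epsilon> (x v))"
    by (rule int_h_mono) (auto intro: mesh u)
  also have "\<dots> = 2 * (\<epsilon> * (1 - \<epsilon>)) * int_h X Th (\<lambda>v. Geps \<epsilon> (x v))" by (rule int_h_cmult)
  finally show ?thesis .
qed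

theorem corollary1:
  fixes T \<eta> :: real
  assumes "T > 0" and "\<eta> > 0" and "CARD('d::finite) \<in> {1, 2, 3}"
  shows "\<exists>C :: real \<Rightarrow> real \<Rightarrow> real.
    \<forall>(X :: nat \<Rightarrow> real^'d) Nd Th \<epsilon> (N::nat) \<phi> \<mu> n.
      structured_mesh X Nd Th \<and> 0 < \<epsilon> \<and> \<epsilon> < 1/2 \<and> 0 < N \<and> n < N \<and>
      Geps_scheme X Th \<eta> \<epsilon> (T / real N) N \<phi> \<mu> \<longrightarrow>
      (let C0 = C (energy X Th \<eta> (\<phi> 0)) (int_h X Th (\<lambda>v. Geps \<epsilon> (\<phi> 0 v))) in
        (\<Sum>e\<in>Th. integral (elem_set X e)
            (\<lambda>y. (P1 X e (\<lambda>v. min (\<phi> (Suc n) v) 0) y)^2))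
          \<le> C0 * (\<epsilon> * (1 - \<epsilon>) / \<eta>^2)
        \<and> C0 * (\<epsilon> * (1 - \<epsilon>) / \<eta>^2) \<le> C0 * (\<epsilon> / \<eta>^2)
        \<and> (\<Sum>e\<in>Th. integral (elem_set X e)
            (\<lambda>y. (P1 X e (\<lambda>v. max (\<phi> (Suc n) v - 1) 0) y)^2))
          \<le> C0 * (\<epsilon> * (1 - \<epsilon>) / \<eta>^2))"

proof -
  define C where "C = (\<lambda>E G::real. max 0 (2 * \<eta>^2 * G + T * (6400 * E + 100 / (\<eta>^2 * (1 - ln 2)) * G)))"
  have d3: "CARD('d) \<le> 3" using assms(3) by auto
  show ?thesis
  proof (rule exI[of _ C], intro allI impI)
    fix X :: "nat \<Rightarrow> real^'d" and Nd Th \<epsilon> and N :: nat and \<phi> \<mu> n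
    assume H: "structured_mesh X Nd Th \<and> 0 < \<epsilon> \<and> \<epsilon> < 1/2 \<and> 0 < N \<and> n < N \<and>
      Geps_scheme X Th \<eta> \<epsilon> (T / real N) N \<phi> \<mu>"
    have mesh: "\<And>e. e \<in> Th \<Longrightarrow> structured_elem X e" using H unfolding structured_mesh_def by auto
    have e: "0 < \<epsilon>" "\<epsilon> < 1/2" using H by auto
    have eta: "\<eta> > 0" using assms by simp
    define dt where "dt = T / real N"
    have dt: "dt > 0" using H assms by (simp add: dt_def)
    have sch: "Geps_scheme X Th \<eta> \<epsilon> dt N \<phi> \<mu>" using H by (simp add: dt_def)
    define E0 where "E0 = energy X Th \<eta> (\<phi> 0)"
    define G0 where "G0 = int_h X Th (\<lambda>v. Geps \<epsilon> (\<phi> 0 v))"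
    define B where "B = 6400 * E0 + 100 / (\<eta>^2 * (1 - ln 2)) * G0"
    define Q where "Q = G0 + T * B / (2 * \<eta>^2)"
    have dec: "int_h X Th (\<lambda>v. Geps \<epsilon> (\<phi> (Suc n) v)) \<le> G0 + real (Suc n) * dt * Eh X Th \<eta> (\<phi> 0) / (2 * \<eta>^2)"
      using scheme_decay[OF mesh e eta dt sch, of "Suc n"] H unfolding G0_def by auto
    have Eh0: "0 \<le> Eh X Th \<eta> (\<phi> 0)" by (rule Eh_nonneg(1)[OF mesh])
    have EB: "Eh X Th \<eta> (\<phi> 0) \<le> B" unfolding B_def E0_def G0_def by (rule init_bound[OF mesh e eta d3])
    have "real (Suc n) * dt \<le> real N * dt" using H dt by (intro mult_right_mono) auto
    also have "real N * dt = T" using H unfolding dt_def by simp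
    finally have ndt: "real (Suc n) * dt \<le> T" .
    have "real (Suc n) * dt * Eh X Th \<eta> (\<phi> 0) \<le> T * B"
      using ndt Eh0 EB assms(1) dt by (intro mult_mono) auto
    hence "real (Suc n) * dt * Eh X Th \<eta> (\<phi> 0) / (2 * \<eta>^2) \<le> T * B / (2 * \<eta>^2)"
      using eta by (intro divide_right_mono) auto
    hence LG: "int_h X Th (\<lambda>v. Geps \<epsilon> (\<phi> (Suc n) v)) \<le> Q" using dec unfolding Q_def by linarith
    define C0 where "C0 = C E0 G0"
    have C00: "0 \<le> C0" unfolding C0_def C_def by simp
    have "2 * \<eta>^2 * Q = 2 * \<eta>^2 * G0 + T * B" unfolding Q_def using eta by (simp add: field_simps)
    hence QC: "2 * \<eta>^2 * Q \<le> C0" unfolding C0_def C_def B_def by simp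
    have pos: "0 < \<epsilon> * (1 - \<epsilon>)" using e by simp
    have key: "2 * (\<epsilon> * (1 - \<epsilon>)) * int_h X Th (\<lambda>v. Geps \<epsilon> (\<phi> (Suc n) v)) \<le> C0 * (\<epsilon> * (1 - \<epsilon>) / \<eta>^2)"
    proof -
      have "2 * (\<epsilon> * (1 - \<epsilon>)) * int_h X Th (\<lambda>v. Geps \<epsilon> (\<phi> (Suc n) v)) \<le> 2 * (\<epsilon> * (1 - \<epsilon>)) * Q"
        using LG pos by (intro mult_left_mono) auto
      also have "\<dots> = (2 * \<eta>^2 * Q) * (\<epsilon> * (1 - \<epsilon>) / \<eta>^2)" using eta by (simp add: field_simps)
      also have "\<dots> \<le> C0 * (\<epsilon> * (1 - \<epsilon>) / \<eta>^2)" using QC pos eta by (intro mult_right_mono) auto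
      finally show ?thesis .
    qed
    have p1: "(\<Sum>e\<in>Th. integral (elem_set X e) (\<lambda>y. (P1 X e (\<lambda>v. min (\<phi> (Suc n) v) 0) y)^2))
        \<le> C0 * (\<epsilon> * (1 - \<epsilon>) / \<eta>^2)"
      using sq_bound[where Th=Th and X=X and u="\<lambda>v. min (\<phi> (Suc n) v) 0" and x="\<phi> (Suc n)", OF mesh e] neg_bound[OF e] key by fastforce
    have p3: "(\<Sum>e\<in>Th. integral (elem_set X e) (\<lambda>y. (P1 X e (\<lambda>v. max (\<phi> (Suc n) v - 1) 0) y)^2))
        \<le> C0 * (\<epsilon> * (1 - \<epsilon>) / \<eta>^2)"
      using sq_bound[where Th=Th and X=X and u="\<lambda>v. max (\<phi> (Suc n) v - 1) 0" and x="\<phi> (Suc n)", OF mesh e] pos_bound[OF e] key by fastforce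
    have p2: "C0 * (\<epsilon> * (1 - \<epsilon>) / \<eta>^2) \<le> C0 * (\<epsilon> / \<eta>^2)"
      using C00 e eta by (intro mult_left_mono divide_right_mono) auto
    show "let C0 = C (energy X Th \<eta> (\<phi> 0)) (int_h X Th (\<lambda>v. Geps \<epsilon> (\<phi> 0 v))) in
        (\<Sum>e\<in>Th. integral (elem_set X e)
            (\<lambda>y. (P1 X e (\<lambda>v. min (\<phi> (Suc n) v) 0) y)^2))
          \<le> C0 * (\<epsilon> * (1 - \<epsilon>) / \<eta>^2)
        \<and> C0 * (\<epsilon> * (1 - \<epsilon>) / \<eta>^2) \<le> C0 * (\<epsilon> / \<eta>^2)
        \<and> (\<Sum>e\<in>Th. integral (elem_set X e)
            (\<lambda>y. (P1 X e (\<lambda>v. max (\<phi> (Suc n) v - 1) 0) y)^2))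
          \<le> C0 * (\<epsilon> * (1 - \<epsilon>) / \<eta>^2)"
      unfolding Let_def C0_def[symmetric, unfolded E0_def G0_def] using p1 p2 p3 by blast
  qed
qed


end
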